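(* Let $d\ge3$, $\{\mathbb{P}^u\}$ satisfy (P1), (P2), (D), (S1), (S2), fix $u$, and let $A\subseteq \mathbb{R}^d$ be compact and $(b_N)$ positive reals. Let $\omega\in\Omega^{1/3,1/9}_{\mathrm{reg}}$. There exists a constant $c_4(\omega)$ and for each $\chi\in(0,1)$ a constant $c_5(\chi)>0$ such that: for integers $N\ge1$, $\ell_*\ge0$, $U_0\in\mathcal U^\omega_{\ell_*,N}$, $\epsilon\in\mathbb{N}$, $\chi\in(0,1)$, $\Sigma\in\mathcal S^\omega_{U_0,\epsilon,\chi}$, if $\ell\ge c_4(\omega)$ with $\epsilon\le\frac14 2^\ell$, $x_0\in\mathcal S_\infty\cap B(0,r_{1/3,4\cdot2^\ell})$ with $\widetilde\sigma^\omega_\ell(x_0)\in[\widetilde\alpha,1-\widetilde\alpha]$, and $y\in\mathcal S_\infty$ with $|y-x_0|\le\frac14 2^\ell$, then $$P^\omega_y[H_\Sigma<T_{B(x_0,5\cdot2^\ell)}]\ge c_5(\chi).$$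
   Context: Framework: $\Omega=\{0,1\}^{\mathbb{Z}^d}$, $\mathcal S=\{x:\omega(x)=1\}$, $\mathcal S_\infty$ vertices of infinite nearest-neighbour components, $B(x,r)$ closed $\ell^\infty$-ball in $\mathbb{Z}^d$, $|\cdot|$ Euclidean norm; assumptions (P1) ergodicity, (P2) monotonicity, (D) sprinkled decoupling, (S1) local uniqueness with rate $\ge(\log R)^{1+\Delta_S(u)}$, (S2) $\eta=\eta(u)=\mathbb{P}^u[0\in\mathcal S_\infty]>0$ continuous. $P^\omega_x$: continuous-time constant-speed simple random walk on $\mathcal S_\infty$; $H_U=\inf\{t\ge0:X_t\in U\}$, $T_U=\inf\{t\ge0:X_t\notin U\}$, $\tau_r=\inf\{t\ge0:|X_t-X_0|_\infty\ge r\}$. $r_{\alpha,R}=\exp(\kappa_{\mathrm{reg}}(\alpha)(\log R)^{1+\Delta_S})$ with $\kappa_{\mathrm{reg}}(\alpha)=\frac1{2d}(\kappa_{d2}(\alpha)\wedge c_{hk6})$. $\Omega^{\alpha,\vartheta}_{\mathrm{reg}}$: configurations with $\mathcal S_\infty$ nonempty connected and finite minimal scales $R_{\mathrm{den}}(\omega,\alpha)$ (volume regularity $(1-\alpha)\eta\le|\mathcal S_\infty\cap B(x,R)|/|B(x,R)|\le(1+\alpha)\eta$ for all $R\ge R_{\mathrm{den}}$, $x\in\mathcal S_\infty\cap B(0,r_{\alpha,R})$), $R_{\mathrm{hk}}(\omega,\alpha)$ (two-sided Gaussian heat kernel bound for all $R\ge R_{\mathrm{hk}}$, $x\in\mathcal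 S_\infty\cap B(0,2r_{\alpha,R})$, $y\in\mathcal S_\infty$, $t\ge R\vee|x-y|_1^{3/2}$), and $R_{\mathrm{khk}}(\omega,\alpha,\vartheta)$ (for integers $R\ge R_{\mathrm{khk}}$, $P^\omega_x[X_t=y,T_{B(x_0,R)\cap\mathcal S_\infty}>t]/\mu_y\ge c_{khk1}(\vartheta)t^{-d/2}$ for $x_0\in\mathcal S_\infty\cap B(0,r_{\alpha,R})$, $x,y\in\mathcal S_\infty\cap B(x_0,(1-\vartheta)R)$, $c_{khk2}(\vartheta)R^2\le t\le R^2$, $\mu_y$ degree in $\mathcal S_\infty$). Sets: $A_N=(NA)\cap\mathbb{Z}^d$; $U_1=\mathcal S_\infty\setminus U_0$; $S$ = points of $U_1$ adjacent to $U_0$; $\sigma^\omega_\ell(x)=\frac{|B(x,2^\ell)\cap U_1|}{|B(x,2^\ell)\cap\mathcal S_\infty|}$, $\widetilde\sigma^\omega_\ell(x)=\frac{|B(x,4\cdot2^\ell)\cap U_1|}{|B(x,4\cdot2^\ell)\cap\mathcal S_\infty|}$; $\widetilde\alpha=\frac3{10}4^{-d}$; $\mathcal U^\omega_{\ell_*,N}$: $U_0\subseteq B(0,b_N)\cap\mathcal S_\infty$ with $\sigma^\omega_\ell(x)\le\frac12$ for all $x\in A_N\cap\mathcal S_\infty$, $\ell\le\ell_*$; $\mathcal S^\omega_{U_0,\epsilon,\chi}$: bounded $\Sigma\subseteq\mathcal S_\infty$ with $P^\omega_x[H_\Sigma<\tau_\epsilon]\ge\chi$ for all $x\in S$. *)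

theory Defs
  imports "HOL-Probability.Probability"
begin

definition l1norm :: "int ^ 'd \<Rightarrow> int" where
  "l1norm z = (\<Sum>i\<in>UNIV. \<bar>z $ i\<bar>)"

definition linfnorm :: "int ^ 'd \<Rightarrow> int" where
  "linfnorm z = Max (range (\<lambda>i. \<bar>z $ i\<bar>))"

definition toR :: "int ^ 'd \<Rightarrow> real ^ 'd" where
  "toR z = (\<chi> i. real_of_int (z $ i))"

definition eucl :: "int ^ 'd \<Rightarrow> real" where
  "eucl z = norm (toR z)"

text \<open>closed l-infinity ball B(x,r) in Z^d\<close>
definition ballinf :: "int ^ 'd \<Rightarrow> real \<Rightarrow> (int ^ 'd) set" where
  "ballinf x r = {z. real_of_int (linfnorm (z - x)) \<le> r}"

definition adj :: "int ^ 'd \<Rightarrow> int ^ 'd \<Rightarrow> bool" where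
  "adj x y \<longleftrightarrow> l1norm (x - y) = 1"

definition conn :: "(int ^ 'd \<Rightarrow> bool) \<Rightarrow> int ^ 'd \<Rightarrow> int ^ 'd \<Rightarrow> bool" where
  "conn \<omega> = (\<lambda>a b. \<omega> a \<and> \<omega> b \<and> adj a b)\<^sup>*\<^sup>*"

definition Sinf :: "(int ^ 'd \<Rightarrow> bool) \<Rightarrow> (int ^ 'd) set" where
  "Sinf \<omega> = {x. \<omega> x \<and> infinite {y. conn \<omega> x y}}"

definition nbrs :: "(int ^ 'd \<Rightarrow> bool) \<Rightarrow> int ^ 'd \<Rightarrow> (int ^ 'd) set" where
  "nbrs \<omega> x = {y. y \<in> Sinf \<omega> \<and> adj x y}"

definition deg :: "(int ^ 'd \<Rightarrow> bool) \<Rightarrow> int ^ 'd \<Rightarrow> real" where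
  "deg \<omega> y = real (card (nbrs \<omega> y))"

text \<open>Construction: i.i.d. pairs (U_n, E_n), U_n uniform on [0,1) selects a uniformly
  chosen neighbour in S_infinity, E_n ~ Exp(1) are the holding times.\<close>

definition walk_space :: "(nat \<Rightarrow> real \<times> real) measure" where
  "walk_space = PiM UNIV (\<lambda>_. uniform_measure lborel {0..<1} \<Otimes>\<^sub>M density lborel (exponential_density 1))"

definition nbr_enum :: "(int ^ 'd \<Rightarrow> bool) \<Rightarrow> int ^ 'd \<Rightarrow> nat \<Rightarrow> int ^ 'd" where
  "nbr_enum \<omega> x = (SOME f. bij_betw f {..<card (nbrs \<omega> x)} (nbrs \<omega> x))"

definition step :: "(int ^ 'd \<Rightarrow> bool) \<Rightarrow> int ^ 'd \<Rightarrow> real \<Rightarrow> int ^ 'd" where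
  "step \<omega> x u = (if nbrs \<omega> x = {} then x
     else nbr_enum \<omega> x (nat \<lfloor>u * real (card (nbrs \<omega> x))\<rfloor>))"

fun jchain :: "(int ^ 'd \<Rightarrow> bool) \<Rightarrow> int ^ 'd \<Rightarrow> (nat \<Rightarrow> real \<times> real) \<Rightarrow> nat \<Rightarrow> int ^ 'd" where
  "jchain \<omega> x \<xi> 0 = x"
| "jchain \<omega> x \<xi> (Suc n) = step \<omega> (jchain \<omega> x \<xi> n) (fst (\<xi> n))"

definition jtime :: "(nat \<Rightarrow> real \<times> real) \<Rightarrow> nat \<Rightarrow> real" where
  "jtime \<xi> n = (\<Sum>k<n. snd (\<xi> k))"

text \<open>X_t = Y_n for J_n <= t < J_(n+1)\<close>
definition wpath :: "(int ^ 'd \<Rightarrow> bool) \<Rightarrow> int ^ 'd \<Rightarrow> (nat \<Rightarrow> real \<times> real) \<Rightarrow> real \<Rightarrow> int ^ 'd" where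
  "wpath \<omega> x \<xi> t = jchain \<omega> x \<xi> (LEAST n. t < jtime \<xi> (Suc n))"

definition Pw :: "(int ^ 'd \<Rightarrow> bool) \<Rightarrow> int ^ 'd \<Rightarrow> ((real \<Rightarrow> int ^ 'd) \<Rightarrow> bool) \<Rightarrow> real" where
  "Pw \<omega> x E = measure walk_space {\<xi> \<in> space walk_space. E (wpath \<omega> x \<xi>)}"

text \<open>H_U, T_U, tau_r (inf of empty set = +infinity)\<close>
definition hitT :: "(real \<Rightarrow> 'a) \<Rightarrow> 'a set \<Rightarrow> ereal" where
  "hitT X U = Inf {ereal t | t. 0 \<le> t \<and> X t \<in> U}"

definition exitT :: "(real \<Rightarrow> 'a) \<Rightarrow> 'a set \<Rightarrow> ereal" where
  "exitT X U = Inf {ereal t | t. 0 \<le> t \<and> X t \<notin> U}"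

definition tauT :: "real \<Rightarrow> (real \<Rightarrow> int ^ 'd) \<Rightarrow> ereal" where
  "tauT r X = Inf {ereal t | t. 0 \<le> t \<and> real_of_int (linfnorm (X t - X 0)) \<ge> r}"

text \<open>r_{alpha,R} = exp(kappa_reg(alpha) (log R)^(1+Delta_S)); kr stands for kappa_reg(alpha)\<close>
definition r_reg :: "real \<Rightarrow> real \<Rightarrow> real \<Rightarrow> real" where
  "r_reg kr DS R = exp (kr * (ln R) powr (1 + DS))"

definition den_ok :: "(int ^ 'd \<Rightarrow> bool) \<Rightarrow> real \<Rightarrow> real \<Rightarrow> real \<Rightarrow> real \<Rightarrow> bool" where
  "den_ok \<omega> \<alpha> \<eta> kr DS \<longleftrightarrow> (\<exists>R0::real. \<forall>R\<ge>R0. \<forall>x \<in> Sinf \<omega> \<inter> ballinf 0 (r_reg kr DS R).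
     (1 - \<alpha>) * \<eta> \<le> real (card (Sinf \<omega> \<inter> ballinf x R)) / real (card (ballinf x R)) \<and>
     real (card (Sinf \<omega> \<inter> ballinf x R)) / real (card (ballinf x R)) \<le> (1 + \<alpha>) * \<eta>)"

definition hk_ok :: "(int ^ 'd \<Rightarrow> bool) \<Rightarrow> real \<Rightarrow> real \<Rightarrow> real \<Rightarrow> real \<Rightarrow> real \<Rightarrow> real \<Rightarrow> bool" where
  "hk_ok \<omega> kr DS c1 c2 c3 c4 \<longleftrightarrow> (\<exists>R0::real. \<forall>R\<ge>R0. \<forall>x \<in> Sinf \<omega> \<inter> ballinf 0 (2 * r_reg kr DS R).
     \<forall>y \<in> Sinf \<omega>. \<forall>t. max R (real_of_int (l1norm (x - y)) powr (3/2)) \<le> t \<longrightarrow>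
       c1 * t powr (- real CARD('d) / 2) * exp (- c2 * real_of_int (l1norm (x - y)) ^ 2 / t)
         \<le> Pw \<omega> x (\<lambda>X. X t = y) / deg \<omega> y \<and>
       Pw \<omega> x (\<lambda>X. X t = y) / deg \<omega> y
         \<le> c3 * t powr (- real CARD('d) / 2) * exp (- c4 * real_of_int (l1norm (x - y)) ^ 2 / t))"

definition khk_ok :: "(int ^ 'd \<Rightarrow> bool) \<Rightarrow> real \<Rightarrow> real \<Rightarrow> real \<Rightarrow> real \<Rightarrow> real \<Rightarrow> bool" where
  "khk_ok \<omega> \<theta> kr DS ck1 ck2 \<longleftrightarrow> (\<exists>R0::nat. \<forall>R::nat\<ge>R0.
     \<forall>x0 \<in> Sinf \<omega> \<inter> ballinf 0 (r_reg kr DS (real R)).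
     \<forall>x \<in> Sinf \<omega> \<inter> ballinf x0 ((1 - \<theta>) * real R).
     \<forall>y \<in> Sinf \<omega> \<inter> ballinf x0 ((1 - \<theta>) * real R).
     \<forall>t. ck2 * real R ^ 2 \<le> t \<and> t \<le> real R ^ 2 \<longrightarrow>
       Pw \<omega> x (\<lambda>X. X t = y \<and> exitT X (ballinf x0 (real R) \<inter> Sinf \<omega>) > ereal t) / deg \<omega> y
         \<ge> ck1 * t powr (- real CARD('d) / 2))"

definition Omega_reg :: "real \<Rightarrow> real \<Rightarrow> real \<Rightarrow> real \<Rightarrow> real \<Rightarrow> real \<Rightarrow> real \<Rightarrow> real
   \<Rightarrow> real \<Rightarrow> real \<Rightarrow> real \<Rightarrow> (int ^ 'd \<Rightarrow> bool) set" where
  "Omega_reg \<alpha> \<theta> \<eta> kr DS c1 c2 c3 c4 ck1 ck2 =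
     {\<omega>. Sinf \<omega> \<noteq> {} \<and>
          (\<forall>x\<in>Sinf \<omega>. \<forall>y\<in>Sinf \<omega>. (\<lambda>a b. a \<in> Sinf \<omega> \<and> b \<in> Sinf \<omega> \<and> adj a b)\<^sup>*\<^sup>* x y) \<and>
          den_ok \<omega> \<alpha> \<eta> kr DS \<and> hk_ok \<omega> kr DS c1 c2 c3 c4 \<and> khk_ok \<omega> \<theta> kr DS ck1 ck2}"

definition A_N :: "(real ^ 'd) set \<Rightarrow> nat \<Rightarrow> (int ^ 'd) set" where
  "A_N A N = {z. toR z \<in> (\<lambda>a. real N *\<^sub>R a) ` A}"

definition U1 :: "(int ^ 'd \<Rightarrow> bool) \<Rightarrow> (int ^ 'd) set \<Rightarrow> (int ^ 'd) set" where
  "U1 \<omega> U0 = Sinf \<omega> - U0"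

definition Sbd :: "(int ^ 'd \<Rightarrow> bool) \<Rightarrow> (int ^ 'd) set \<Rightarrow> (int ^ 'd) set" where
  "Sbd \<omega> U0 = {x \<in> U1 \<omega> U0. \<exists>z\<in>U0. adj x z}"

definition sigma :: "(int ^ 'd \<Rightarrow> bool) \<Rightarrow> (int ^ 'd) set \<Rightarrow> nat \<Rightarrow> int ^ 'd \<Rightarrow> real" where
  "sigma \<omega> U0 l x = real (card (ballinf x (2 ^ l) \<inter> U1 \<omega> U0)) / real (card (ballinf x (2 ^ l) \<inter> Sinf \<omega>))"

definition sigmat :: "(int ^ 'd \<Rightarrow> bool) \<Rightarrow> (int ^ 'd) set \<Rightarrow> nat \<Rightarrow> int ^ 'd \<Rightarrow> real" where
  "sigmat \<omega> U0 l x = real (card (ballinf x (4 * 2 ^ l) \<inter> U1 \<omega> U0)) / real (card (ballinf x (4 * 2 ^ l) \<inter> Sinf \<omega>))"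

definition alphat :: "'d itself \<Rightarrow> real" where
  "alphat _ = 3 / 10 * (1 / 4 ^ CARD('d))"

definition Ucal :: "(int ^ 'd \<Rightarrow> bool) \<Rightarrow> (real ^ 'd) set \<Rightarrow> (nat \<Rightarrow> real) \<Rightarrow> nat \<Rightarrow> nat \<Rightarrow> (int ^ 'd) set set" where
  "Ucal \<omega> A b ls N = {U0. U0 \<subseteq> ballinf 0 (b N) \<inter> Sinf \<omega> \<and>
      (\<forall>x \<in> A_N A N \<inter> Sinf \<omega>. \<forall>l\<le>ls. sigma \<omega> U0 l x \<le> 1/2)}"

definition Scal :: "(int ^ 'd \<Rightarrow> bool) \<Rightarrow> (int ^ 'd) set \<Rightarrow> nat \<Rightarrow> real \<Rightarrow> (int ^ 'd) set set" where
  "Scal \<omega> U0 \<epsilon> ch = {Sg. finite Sg \<and> Sg \<subseteq> Sinf \<omega> \<and>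
      (\<forall>x \<in> Sbd \<omega> U0. Pw \<omega> x (\<lambda>X. hitT X Sg < tauT (real \<epsilon>) X) \<ge> ch)}"

end

theory Submission
  imports Defs
begin


definition M0 :: "(real \<times> real) measure" where
  "M0 = uniform_measure lborel {0..<1} \<Otimes>\<^sub>M density lborel (exponential_density 1)"

lemma prob_M0: "prob_space M0"
  unfolding M0_def
  by (intro prob_space_pair prob_space_uniform_measure prob_space_exponential_density) auto

lemma walk_space_eq: "walk_space = PiM UNIV (\<lambda>_. M0)"
  unfolding walk_space_def M0_def ..

interpretation W: sequence_space M0
  by (simp add: sequence_space_def product_prob_space_def product_prob_space_axioms_def prob_M0 product_sigma_finite_def prob_space_imp_sigma_finite)

lemma prob_walk: "prob_space walk_space"
  unfolding walk_space_eq by (rule W.prob_space_axioms)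

lemma space_M0: "space M0 = UNIV"
  unfolding M0_def by (simp add: space_pair_measure)

lemma sets_M0: "sets M0 = sets (borel \<Otimes>\<^sub>M borel)"
  unfolding M0_def by (intro sets_pair_measure_cong) auto

lemma meas_coord [measurable]: "(\<lambda>\<xi>. \<xi> n) \<in> measurable walk_space M0"
  unfolding walk_space_eq by measurable

lemma meas_fst [measurable]: "(\<lambda>\<xi>. fst (\<xi> n)) \<in> borel_measurable walk_space"
proof -
  have "fst \<in> borel_measurable M0" unfolding M0_def by measurable
  then show ?thesis using meas_coord by (rule measurable_compose_rev)
qed

lemma meas_snd [measurable]: "(\<lambda>\<xi>. snd (\<xi> n)) \<in> borel_measurable walk_space"
proof -
  have "snd \<in> borel_measurable M0" unfolding M0_def by measurable
  then show ?thesis using meas_coord by (rule measurable_compose_rev)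
qed

lemma meas_jtime [measurable]: "(\<lambda>\<xi>. jtime \<xi> n) \<in> borel_measurable walk_space"
  unfolding jtime_def by measurable

lemma meas_step: "step \<omega> x \<in> measurable borel (count_space UNIV)"
proof -
  have "(\<lambda>u::real. nat \<lfloor>u * real (card (nbrs \<omega> x))\<rfloor>) \<in> measurable borel (count_space UNIV)"
    by measurable
  then have "(\<lambda>u. nbr_enum \<omega> x (nat \<lfloor>u * real (card (nbrs \<omega> x))\<rfloor>)) \<in> measurable borel (count_space UNIV)"
    by (rule measurable_compose) simp
  then show ?thesis unfolding step_def[abs_def] by (cases "nbrs \<omega> x = {}") auto
qed

lemma meas_jchain [measurable]: "(\<lambda>\<xi>. jchain \<omega> x \<xi> n) \<in> measurable walk_space (count_space UNIV)"
proof (induction n)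
  case 0 then show ?case by simp
next
  case (Suc n)
  have "(\<lambda>\<xi>. step \<omega> z (fst (\<xi> n))) \<in> measurable walk_space (count_space UNIV)" for z
    using meas_step meas_fst by (rule measurable_compose_rev)
  then show ?case
    using measurable_compose_countable[where f="\<lambda>z \<xi>. step \<omega> z (fst (\<xi> n))", OF _ Suc]
    by simp
qed

lemma meas_wpath [measurable]: "(\<lambda>\<xi>. wpath \<omega> x \<xi> t) \<in> measurable walk_space (count_space UNIV)"
proof -
  have "(\<lambda>\<xi>. LEAST n. t < jtime \<xi> (Suc n)) \<in> measurable walk_space (count_space UNIV)"
    by measurable
  then show ?thesis unfolding wpath_def
    using measurable_compose_countable[where f="\<lambda>n \<xi>. jchain \<omega> x \<xi> n"] by simp
qed


definition Pos :: "(nat \<Rightarrow> real \<times> real) \<Rightarrow> bool" where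
  "Pos \<xi> \<longleftrightarrow> (\<forall>k. 0 < snd (\<xi> k))"

lemma jtime_0 [simp]: "jtime \<xi> 0 = 0" by (simp add: jtime_def)
lemma jtime_Suc: "jtime \<xi> (Suc n) = jtime \<xi> n + snd (\<xi> n)" by (simp add: jtime_def)

lemma jtime_mono_strict: "Pos \<xi> \<Longrightarrow> m < n \<Longrightarrow> jtime \<xi> m < jtime \<xi> n"
proof (induction n)
  case 0 then show ?case by simp
next
  case (Suc n)
  have "0 < snd (\<xi> n)" using Suc.prems by (simp add: Pos_def)
  then show ?case using Suc by (cases "m = n") (auto simp: jtime_Suc)
qed

lemma jtime_mono: "Pos \<xi> \<Longrightarrow> m \<le> n \<Longrightarrow> jtime \<xi> m \<le> jtime \<xi> n"
  using jtime_mono_strict by (cases "m = n") (auto intro: less_imp_le)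

lemma wpath_jtime: assumes "Pos \<xi>" shows "wpath \<omega> x \<xi> (jtime \<xi> k) = jchain \<omega> x \<xi> k"
proof -
  have "(LEAST n. jtime \<xi> k < jtime \<xi> (Suc n)) = k"
  proof (rule Least_equality)
    show "jtime \<xi> k < jtime \<xi> (Suc k)" using jtime_mono_strict[OF assms] by simp
    fix n assume "jtime \<xi> k < jtime \<xi> (Suc n)"
    then show "k \<le> n" using jtime_mono[OF assms, of "Suc n" k] by (cases "k \<le> n") auto
  qed
  then show ?thesis by (simp add: wpath_def)
qed

lemma wpath_some: assumes "Pos \<xi>" "0 \<le> t"
  shows "\<exists>n. wpath \<omega> x \<xi> t = jchain \<omega> x \<xi> n \<and> (\<forall>k\<le>n. jtime \<xi> k \<le> t)"
proof (cases "\<exists>n. t < jtime \<xi> (Suc n)")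
  case True
  define n0 where "n0 = (LEAST n. t < jtime \<xi> (Suc n))"
  have "\<forall>k\<le>n0. jtime \<xi> k \<le> t"
  proof (intro allI impI)
    fix k assume k: "k \<le> n0"
    show "jtime \<xi> k \<le> t"
    proof (cases k)
      case 0 then show ?thesis using assms by simp
    next
      case (Suc m)
      then have "m < n0" using k by simp
      then have "\<not> t < jtime \<xi> (Suc m)" unfolding n0_def by (rule not_less_Least)
      then show ?thesis using Suc by simp
    qed
  qed
  then show ?thesis unfolding wpath_def n0_def[symmetric] by blast
next
  case False
  then have "\<forall>k. jtime \<xi> k \<le> t" using assms(2) by (metis jtime_0 not_less not0_implies_Suc)
  then show ?thesis unfolding wpath_def by blast
qed

lemma wpath_0: "Pos \<xi> \<Longrightarrow> wpath \<omega> x \<xi> 0 = x"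
  using wpath_jtime[of \<xi> \<omega> x 0] by simp

lemma wpath_rc: "\<exists>\<delta>>0. \<forall>s. t \<le> s \<and> s < t + \<delta> \<longrightarrow> wpath \<omega> x \<xi> s = wpath \<omega> x \<xi> t"
proof (cases "\<exists>n. t < jtime \<xi> (Suc n)")
  case True
  define n0 where "n0 = (LEAST n. t < jtime \<xi> (Suc n))"
  have n0: "t < jtime \<xi> (Suc n0)" unfolding n0_def using True by (rule LeastI_ex)
  have lt: "m < n0 \<Longrightarrow> \<not> t < jtime \<xi> (Suc m)" for m unfolding n0_def by (rule not_less_Least)
  show ?thesis
  proof (intro exI[of _ "jtime \<xi> (Suc n0) - t"] conjI allI impI)
    show "0 < jtime \<xi> (Suc n0) - t" using n0 by simp
    fix s assume s: "t \<le> s \<and> s < t + (jtime \<xi> (Suc n0) - t)"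
    have "(LEAST n. s < jtime \<xi> (Suc n)) = n0"
    proof (rule Least_equality)
      show "s < jtime \<xi> (Suc n0)" using s by simp
      fix m assume "s < jtime \<xi> (Suc m)"
      then show "n0 \<le> m" using lt[of m] s by force
    qed
    then show "wpath \<omega> x \<xi> s = wpath \<omega> x \<xi> t" unfolding wpath_def n0_def by simp
  qed
next
  case False
  show ?thesis
  proof (intro exI[of _ 1] conjI allI impI)
    fix s assume s: "t \<le> s \<and> s < t + 1"
    have "\<forall>n. \<not> s < jtime \<xi> (Suc n)" using False s by (meson le_less_trans)
    then have "(\<lambda>n. s < jtime \<xi> (Suc n)) = (\<lambda>n. t < jtime \<xi> (Suc n))" using False by auto
    then show "wpath \<omega> x \<xi> s = wpath \<omega> x \<xi> t" unfolding wpath_def by simp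
  qed simp
qed

lemma Inf_lt_rat:
  fixes X :: "real \<Rightarrow> 'a"
  assumes rc: "\<And>t. \<exists>\<delta>>0. \<forall>s. t \<le> s \<and> s < t + \<delta> \<longrightarrow> X s = X t"
  shows "Inf {ereal t | t. 0 \<le> t \<and> P (X t)} < ereal r \<longleftrightarrow>
         (\<exists>p::rat. 0 \<le> p \<and> real_of_rat p < r \<and> P (X (real_of_rat p)))"
proof
  assume "Inf {ereal t | t. 0 \<le> t \<and> P (X t)} < ereal r"
  then obtain e where "e \<in> {ereal t | t. 0 \<le> t \<and> P (X t)}" "e < ereal r"
    by (auto simp: Inf_less_iff)
  then obtain t where t: "0 \<le> t" "P (X t)" "t < r" by auto
  obtain \<delta> where d: "\<delta> > 0" "\<And>s. t \<le> s \<and> s < t + \<delta> \<Longrightarrow> X s = X t" using rc[of t] by blast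
  have "t < min (t + \<delta>) r" using d(1) t(3) by simp
  then obtain q where q: "q \<in> \<rat>" "t < q" "q < min (t + \<delta>) r"
    using Rats_dense_in_real by blast
  obtain p where p: "q = real_of_rat p" using q(1) Rats_cases by blast
  have "X q = X t" using d(2)[of q] q(2,3) by simp
  show "\<exists>p::rat. 0 \<le> p \<and> real_of_rat p < r \<and> P (X (real_of_rat p))"
  proof (intro exI[of _ p] conjI)
    show "0 \<le> p" using q(2) t(1) p by (metis of_rat_less_eq of_rat_0 less_imp_le order_le_less_trans)
    show "real_of_rat p < r" using q(3) p by simp
    show "P (X (real_of_rat p))" using \<open>X q = X t\<close> t(2) p by simp
  qed
next
  assume "\<exists>p::rat. 0 \<le> p \<and> real_of_rat p < r \<and> P (X (real_of_rat p))"
  then obtain p :: rat where p: "0 \<le> p" "real_of_rat p < r" "P (X (real_of_rat p))" by blast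
  have "Inf {ereal t | t. 0 \<le> t \<and> P (X t)} \<le> ereal (real_of_rat p)"
    by (rule Inf_lower) (use p(1,3) in \<open>auto simp: zero_le_of_rat_iff\<close>)
  also have "\<dots> < ereal r" using p by simp
  finally show "Inf {ereal t | t. 0 \<le> t \<and> P (X t)} < ereal r" .
qed

lemma ereal_lt_rat: "(a::ereal) < b \<longleftrightarrow> (\<exists>q::rat. a < ereal (real_of_rat q) \<and> \<not> b < ereal (real_of_rat q))"
proof
  assume "a < b"
  then obtain z where z: "a < ereal z" "ereal z < b" using ereal_dense2 by blast
  then obtain z' where z': "a < ereal z'" "ereal z' < ereal z" using ereal_dense2 by blast
  have "z' < z" using z'(2) by simp
  then obtain q where q: "q \<in> \<rat>" "z' < q" "q < z" using Rats_dense_in_real by blast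
  obtain p where p: "q = real_of_rat p" using q(1) Rats_cases by blast
  have "ereal z' < ereal q" using q(2) by simp
  then have 1: "a < ereal q" using z'(1) by (rule less_trans[rotated])
  have "ereal q < ereal z" using q(3) by simp
  then have "ereal q < b" using z(2) by (rule less_trans)
  then have 2: "\<not> b < ereal q" by simp
  show "\<exists>q::rat. a < ereal (real_of_rat q) \<and> \<not> b < ereal (real_of_rat q)"
    using 1 2 p by blast
next
  assume "\<exists>q::rat. a < ereal (real_of_rat q) \<and> \<not> b < ereal (real_of_rat q)"
  then obtain q :: rat where "a < ereal (real_of_rat q)" "ereal (real_of_rat q) \<le> b" by (auto simp: not_less)
  then show "a < b" by (rule less_le_trans)
qed

lemma hit_exit_iff:
  "hitT (wpath \<omega> x \<xi>) Sg < exitT (wpath \<omega> x \<xi>) B \<longleftrightarrow>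
   (\<exists>q::rat. (\<exists>p::rat. 0 \<le> p \<and> real_of_rat p < real_of_rat q \<and> wpath \<omega> x \<xi> (real_of_rat p) \<in> Sg)
       \<and> \<not> (\<exists>p::rat. 0 \<le> p \<and> real_of_rat p < real_of_rat q \<and> wpath \<omega> x \<xi> (real_of_rat p) \<notin> B))"
  unfolding hitT_def exitT_def
  by (subst ereal_lt_rat, subst (1 2) Inf_lt_rat[where X="wpath \<omega> x \<xi>", OF wpath_rc]) simp

lemma meas_hit_exit [measurable]:
  "{\<xi> \<in> space walk_space. hitT (wpath \<omega> x \<xi>) Sg < exitT (wpath \<omega> x \<xi>) B} \<in> sets walk_space"
  unfolding hit_exit_iff by measurable


lemma space_walk: "space walk_space = UNIV"
  unfolding walk_space_eq by (simp add: space_PiM space_M0)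

lemma AE_M0: "AE p in M0. 0 < snd p"
proof -
  let ?U = "uniform_measure lborel {0..<1::real}"
  let ?D = "density lborel (\<lambda>x. ennreal (exponential_density 1 x))"
  interpret U: prob_space ?U by (intro prob_space_uniform_measure) auto
  interpret D: prob_space ?D by (rule prob_space_exponential_density) simp
  interpret P: pair_sigma_finite ?U ?D ..
  have fm: "(\<lambda>x. ennreal (exponential_density 1 x)) \<in> borel_measurable lborel"
    unfolding exponential_density_def by measurable
  have "AE y in ?D. 0 < y"
    unfolding AE_density[OF fm]
    using AE_lborel_singleton[of 0]
    by eventually_elim (auto simp: exponential_density_def split: if_splits)
  have "measurable (?U \<Otimes>\<^sub>M ?D) ?D = measurable (?U \<Otimes>\<^sub>M ?D) borel"
    by (rule measurable_cong_sets) auto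
  then have sm: "snd \<in> borel_measurable (?U \<Otimes>\<^sub>M ?D)" using measurable_snd by metis
  have "{p \<in> space (?U \<Otimes>\<^sub>M ?D). 0 < snd p} = snd -` {0<..} \<inter> space (?U \<Otimes>\<^sub>M ?D)" by auto
  also have "\<dots> \<in> sets (?U \<Otimes>\<^sub>M ?D)" using sm by (rule measurable_sets) simp
  finally have ms: "{p \<in> space (?U \<Otimes>\<^sub>M ?D). 0 < snd p} \<in> sets (?U \<Otimes>\<^sub>M ?D)" .
  have "AE p in ?U \<Otimes>\<^sub>M ?D. 0 < snd p"
    by (rule P.AE_pair_measure[OF ms]) (use \<open>AE y in ?D. 0 < y\<close> in \<open>auto intro: AE_I2\<close>)
  then show ?thesis unfolding M0_def .
qed

lemma AE_Pos: "AE \<xi> in walk_space. Pos \<xi>"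
proof -
  have "AE \<xi> in walk_space. 0 < snd (\<xi> k)" for k
    unfolding walk_space_eq
    by (rule AE_PiM_component[where P="\<lambda>p. 0 < snd p"]) (auto simp: prob_M0 AE_M0)
  then show ?thesis unfolding Pos_def by (simp add: AE_all_countable)
qed

lemma meas_shift [measurable]: "(\<lambda>\<xi>. \<lambda>k. \<xi> (n + k)) \<in> measurable walk_space walk_space"
  unfolding walk_space_eq
  by (rule measurable_PiM_single'[where f="\<lambda>k \<xi>. \<xi> (n + k)"]) (auto simp: space_PiM space_M0)

lemma indep_shift:
  assumes A: "A \<in> sets walk_space" and B: "B \<in> sets walk_space"
    and dep: "\<And>\<xi> \<xi>'. (\<forall>k<n. \<xi> k = \<xi>' k) \<Longrightarrow> \<xi> \<in> A \<longleftrightarrow> \<xi>' \<in> A"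
  shows "measure walk_space {\<xi> \<in> A. (\<lambda>k. \<xi> (n+k)) \<in> B} = measure walk_space A * measure walk_space B"
proof -
  let ?S = "PiM UNIV (\<lambda>_::nat. M0)"
  let ?f = "\<lambda>(\<omega>, \<omega>'). comb_seq n \<omega> \<omega>'"
  have X: "{\<xi> \<in> A. (\<lambda>k. \<xi> (n+k)) \<in> B} = A \<inter> ((\<lambda>\<xi>. \<lambda>k. \<xi> (n + k)) -` B \<inter> space walk_space)"
    by (auto simp: space_walk)
  have Xs: "{\<xi> \<in> A. (\<lambda>k. \<xi> (n+k)) \<in> B} \<in> sets ?S"
    unfolding X walk_space_eq[symmetric] using A B meas_shift[of n] by (auto intro: measurable_sets)
  have pre: "?f -` {\<xi> \<in> A. (\<lambda>k. \<xi> (n+k)) \<in> B} \<inter> space (?S \<Otimes>\<^sub>M ?S) = A \<times> B"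
  proof -
    have 1: "comb_seq n \<omega> \<omega>' \<in> A \<longleftrightarrow> \<omega> \<in> A" for \<omega> \<omega>'
      by (rule dep) (simp add: comb_seq_less)
    have 2: "(\<lambda>k. comb_seq n \<omega> \<omega>' (n + k)) = \<omega>'" for \<omega> \<omega>'
      using comb_seq_add[of n \<omega> \<omega>'] by (simp add: add.commute)
    show ?thesis by (auto simp: 1 2 space_pair_measure space_walk[unfolded walk_space_eq])
  qed
  have "measure ?S {\<xi> \<in> A. (\<lambda>k. \<xi> (n+k)) \<in> B} = measure (distr (?S \<Otimes>\<^sub>M ?S) ?S ?f) {\<xi> \<in> A. (\<lambda>k. \<xi> (n+k)) \<in> B}"
    by (simp add: W.PiM_comb_seq)
  also have "\<dots> = measure (?S \<Otimes>\<^sub>M ?S) (?f -` {\<xi> \<in> A. (\<lambda>k. \<xi> (n+k)) \<in> B} \<inter> space (?S \<Otimes>\<^sub>M ?S))"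
    by (rule measure_distr[OF measurable_comb_seq Xs])
  also have "\<dots> = measure (?S \<Otimes>\<^sub>M ?S) (A \<times> B)"
    by (simp only: pre)
  also have "\<dots> = measure ?S A * measure ?S B"
  proof -
    have "emeasure (?S \<Otimes>\<^sub>M ?S) (A \<times> B) = emeasure ?S A * emeasure ?S B"
      using A B unfolding walk_space_eq by (rule W.P.emeasure_pair_measure_Times)
    then show ?thesis
      by (simp add: measure_def enn2real_mult)
  qed
  finally show ?thesis unfolding walk_space_eq .
qed


definition Good :: "(nat \<Rightarrow> real \<times> real) \<Rightarrow> bool" where
  "Good \<xi> \<longleftrightarrow> (\<forall>k. 0 < snd (\<xi> k) \<and> 0 \<le> fst (\<xi> k) \<and> fst (\<xi> k) < 1)"

lemma Good_Pos: "Good \<xi> \<Longrightarrow> Pos \<xi>" by (simp add: Good_def Pos_def)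

lemma AE_M0': "AE p in M0. 0 < snd p \<and> 0 \<le> fst p \<and> fst p < 1"
proof -
  let ?U = "uniform_measure lborel {0..<1::real}"
  let ?D = "density lborel (\<lambda>x. ennreal (exponential_density 1 x))"
  interpret U: prob_space ?U by (intro prob_space_uniform_measure) auto
  interpret D: prob_space ?D by (rule prob_space_exponential_density) simp
  interpret P: pair_sigma_finite ?U ?D ..
  have fm: "(\<lambda>x. ennreal (exponential_density 1 x)) \<in> borel_measurable lborel"
    unfolding exponential_density_def by measurable
  have aD: "AE y in ?D. 0 < y"
    unfolding AE_density[OF fm]
    using AE_lborel_singleton[of 0]
    by eventually_elim (auto simp: exponential_density_def split: if_splits)
  have aU: "AE x in ?U. 0 \<le> x \<and> x < 1"
    by (rule AE_uniform_measureI) auto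
  have "measurable (?U \<Otimes>\<^sub>M ?D) ?D = measurable (?U \<Otimes>\<^sub>M ?D) borel"
    by (rule measurable_cong_sets) auto
  then have sm: "snd \<in> borel_measurable (?U \<Otimes>\<^sub>M ?D)" using measurable_snd by metis
  have "measurable (?U \<Otimes>\<^sub>M ?D) ?U = measurable (?U \<Otimes>\<^sub>M ?D) borel"
    by (rule measurable_cong_sets) auto
  then have fm': "fst \<in> borel_measurable (?U \<Otimes>\<^sub>M ?D)" using measurable_fst by metis
  have ms: "{p \<in> space (?U \<Otimes>\<^sub>M ?D). 0 < snd p \<and> 0 \<le> fst p \<and> fst p < 1} \<in> sets (?U \<Otimes>\<^sub>M ?D)"
    using sm fm' by measurable
  have "AE p in ?U \<Otimes>\<^sub>M ?D. 0 < snd p \<and> 0 \<le> fst p \<and> fst p < 1"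
  proof (rule P.AE_pair_measure[OF ms])
    show "AE x in ?U. AE y in ?D. 0 < snd (x, y) \<and> 0 \<le> fst (x, y) \<and> fst (x, y) < 1"
      using aU by eventually_elim (use aD in \<open>auto elim: AE_mp\<close>)
  qed
  then show ?thesis unfolding M0_def .
qed

lemma AE_Good: "AE \<xi> in walk_space. Good \<xi>"
proof -
  have "AE \<xi> in walk_space. 0 < snd (\<xi> k) \<and> 0 \<le> fst (\<xi> k) \<and> fst (\<xi> k) < 1" for k
    unfolding walk_space_eq
    by (rule AE_PiM_component[where P="\<lambda>p. 0 < snd p \<and> 0 \<le> fst p \<and> fst p < 1", OF prob_M0 UNIV_I AE_M0'])
  then show ?thesis unfolding Good_def by (simp add: AE_all_countable)
qed

lemma meas_Good [measurable]: "Measurable.pred walk_space Good"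
  unfolding Good_def by measurable

lemma null_notGood: "{\<xi> \<in> space walk_space. \<not> Good \<xi>} \<in> sets walk_space"
    "measure walk_space {\<xi> \<in> space walk_space. \<not> Good \<xi>} = 0"
proof -
  show "{\<xi> \<in> space walk_space. \<not> Good \<xi>} \<in> sets walk_space" by measurable
  then show "measure walk_space {\<xi> \<in> space walk_space. \<not> Good \<xi>} = 0"
    using AE_Good by (simp add: AE_iff_measurable[OF _ refl] measure_def)
qed


lemma abs_le_linf: "\<bar>z $ i\<bar> \<le> linfnorm z"
  unfolding linfnorm_def by (rule Max_ge) auto

lemma linf_le_iff: "linfnorm z \<le> r \<longleftrightarrow> (\<forall>i. \<bar>z $ i\<bar> \<le> r)"
  unfolding linfnorm_def by (subst Max_le_iff) auto

lemma linf_nonneg: "0 \<le> linfnorm z"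
  using abs_le_linf[of z undefined] by linarith

lemma linf_triangle: "linfnorm (a + b) \<le> linfnorm a + linfnorm b"
proof -
  have "\<bar>(a + b) $ i\<bar> \<le> linfnorm a + linfnorm b" for i
    using abs_le_linf[of a i] abs_le_linf[of b i] by (simp add: abs_triangle_ineq order_trans[OF abs_triangle_ineq])
  then show ?thesis by (simp add: linf_le_iff)
qed

lemma linf_commute: "linfnorm (a - b) = linfnorm (b - a)"
  unfolding linfnorm_def by (simp add: abs_minus_commute)

lemma linf_le_eucl: "real_of_int (linfnorm z) \<le> eucl z"
proof -
  have "Max (range (\<lambda>i. \<bar>z $ i\<bar>)) \<in> range (\<lambda>i. \<bar>z $ i\<bar>)" by (rule Max_in) auto
  then obtain i where "linfnorm z = \<bar>z $ i\<bar>" unfolding linfnorm_def by blast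
  moreover have "\<bar>toR z $ i\<bar> \<le> norm (toR z)" by (rule component_le_norm_cart)
  ultimately show ?thesis by (simp add: eucl_def toR_def)
qed

lemma ballinf_sub_image:
  fixes x :: "int ^ 'd"
  shows "ballinf x r \<subseteq> (\<lambda>f. x + vec_lambda f) ` (PiE UNIV (\<lambda>_. {-\<lceil>r\<rceil>..\<lceil>r\<rceil>}))"
proof
  fix z assume z: "z \<in> ballinf x r"
  have h: "\<bar>(z - x) $ i\<bar> \<le> \<lceil>r\<rceil>" for i
  proof -
    have "real_of_int \<bar>(z - x) $ i\<bar> \<le> r"
      using z abs_le_linf[of "z - x" i] by (auto simp: ballinf_def)
    then show ?thesis by linarith
  qed
  have b: "-\<lceil>r\<rceil> \<le> (z - x) $ i \<and> (z - x) $ i \<le> \<lceil>r\<rceil>" for i using h[of i] unfolding abs_le_iff by linarith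
  have "(\<lambda>i. (z - x) $ i) \<in> PiE UNIV (\<lambda>_. {-\<lceil>r\<rceil>..\<lceil>r\<rceil>})" using b by (simp add: PiE_iff)
  moreover have "z = x + vec_lambda (\<lambda>i. (z - x) $ i)" by (simp add: vec_eq_iff)
  ultimately show "z \<in> (\<lambda>f. x + vec_lambda f) ` (PiE UNIV (\<lambda>_. {-\<lceil>r\<rceil>..\<lceil>r\<rceil>}))" by blast
qed

lemma finite_ballinf: "finite (ballinf x r)"
  by (rule finite_subset[OF ballinf_sub_image]) (auto intro!: finite_PiE)

lemma card_ballinf_ge:
  fixes x :: "int ^ 'd"
  shows "real (2 * M + 1) ^ CARD('d) \<le> real (card (ballinf x (real M)))"
proof -
  let ?P = "PiE (UNIV :: 'd set) (\<lambda>_. {-int M..int M})"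
  have inj: "inj_on (\<lambda>f. x + vec_lambda f) ?P"
  proof (rule inj_onI)
    fix f g assume f: "f \<in> ?P" and g: "g \<in> ?P" and eq: "x + vec_lambda f = x + vec_lambda g"
    then have "vec_lambda f = vec_lambda g" by simp
    then have "f i = g i" for i by (metis vec_lambda_beta)
    then show "f = g" by auto
  qed
  have sub: "(\<lambda>f. x + vec_lambda f) ` ?P \<subseteq> ballinf x (real M)"
  proof
    fix z assume "z \<in> (\<lambda>f. x + vec_lambda f) ` ?P"
    then obtain f where f: "f \<in> ?P" "z = x + vec_lambda f" by blast
    have "\<bar>(z - x) $ i\<bar> \<le> int M" for i
    proof -
      have "-int M \<le> f i \<and> f i \<le> int M" using f(1) by (auto simp: PiE_iff)
      moreover have "(z - x) $ i = f i" using f(2) by simp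
      ultimately show ?thesis by (simp add: abs_le_iff)
    qed
    then have "linfnorm (z - x) \<le> int M" by (simp add: linf_le_iff)
    then show "z \<in> ballinf x (real M)" by (simp add: ballinf_def)
  qed
  have e: "nat (2 * int M + 1) = Suc (2 * M)" by arith
  have cP: "card ?P = (2 * M + 1) ^ CARD('d)"
    by (simp add: card_PiE e)
  have "(2 * M + 1) ^ CARD('d) = card ?P" using cP by simp
  also have "\<dots> = card ((\<lambda>f. x + vec_lambda f) ` ?P)" by (rule card_image[OF inj, symmetric])
  also have "\<dots> \<le> card (ballinf x (real M))" by (rule card_mono[OF finite_ballinf sub])
  finally show ?thesis by (metis of_nat_le_iff of_nat_power)
qed

lemma adj_sym: "adj x y = adj y x"
proof -
  have "l1norm (x - y) = l1norm (y - x)"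
    unfolding l1norm_def by (intro sum.cong) (auto simp: abs_minus_commute)
  then show ?thesis by (simp add: adj_def)
qed

lemma adj_ballinf: "adj x y \<Longrightarrow> y \<in> ballinf x 1"
proof -
  assume "adj x y"
  then have s: "(\<Sum>i\<in>UNIV. \<bar>(x - y) $ i\<bar>) = 1" by (simp add: adj_def l1norm_def)
  have "\<bar>(x - y) $ i\<bar> \<le> 1" for i
    using member_le_sum[of i UNIV "\<lambda>i. \<bar>(x - y) $ i\<bar>"] s by simp
  then have "linfnorm (x - y) \<le> 1" by (simp add: linf_le_iff)
  then show ?thesis by (simp add: ballinf_def linf_commute)
qed

lemma finite_nbrs: "finite (nbrs \<omega> x)"
  by (rule finite_subset[OF _ finite_ballinf[of x 1]]) (auto simp: nbrs_def adj_ballinf)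

lemma step_cases:
  assumes "0 \<le> u" "u < 1"
  shows "step \<omega> x u = x \<or> step \<omega> x u \<in> nbrs \<omega> x"
proof (cases "nbrs \<omega> x = {}")
  case True then show ?thesis by (simp add: step_def)
next
  case False
  let ?c = "card (nbrs \<omega> x)"
  have c: "0 < ?c" using False finite_nbrs card_gt_0_iff by blast
  obtain h where "bij_betw h {0..<?c} (nbrs \<omega> x)" using ex_bij_betw_nat_finite[OF finite_nbrs] by blast
  then have "\<exists>f. bij_betw f {..<?c} (nbrs \<omega> x)" by (auto simp: lessThan_atLeast0)
  then have b: "bij_betw (nbr_enum \<omega> x) {..<?c} (nbrs \<omega> x)"
    unfolding nbr_enum_def by (rule someI_ex)
  have "u * real ?c < real ?c" using assms c by simp
  then have "nat \<lfloor>u * real ?c\<rfloor> < ?c" using assms c by (simp add: nat_less_iff floor_less_iff)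
  then have "nbr_enum \<omega> x (nat \<lfloor>u * real ?c\<rfloor>) \<in> nbrs \<omega> x"
    using bij_betwE[OF b] by blast
  then show ?thesis using False by (simp add: step_def)
qed

lemma jchain_Sinf:
  assumes "Good \<xi>" "x \<in> Sinf \<omega>"
  shows "jchain \<omega> x \<xi> n \<in> Sinf \<omega> \<and>
    (jchain \<omega> x \<xi> (Suc n) = jchain \<omega> x \<xi> n \<or> adj (jchain \<omega> x \<xi> n) (jchain \<omega> x \<xi> (Suc n)))"
proof (induction n)
  case 0
  have "0 \<le> fst (\<xi> 0)" "fst (\<xi> 0) < 1" using assms(1) by (auto simp: Good_def)
  then show ?case using step_cases[of "fst (\<xi> 0)" \<omega> x] assms(2) by (auto simp: nbrs_def)
next
  case (Suc n)
  have i1: "jchain \<omega> x \<xi> (Suc n) \<in> Sinf \<omega>"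
    using Suc step_cases[of "fst (\<xi> n)" \<omega> "jchain \<omega> x \<xi> n"] assms(1)
    by (auto simp: Good_def nbrs_def)
  have "0 \<le> fst (\<xi> (Suc n))" "fst (\<xi> (Suc n)) < 1" using assms(1) by (auto simp: Good_def)
  then show ?case using i1 step_cases[of "fst (\<xi> (Suc n))" \<omega> "jchain \<omega> x \<xi> (Suc n)"]
    by (auto simp: nbrs_def)
qed

lemma jchain_local: "(\<forall>j<k. \<xi> j = \<xi>' j) \<Longrightarrow> jchain \<omega> x \<xi> k = jchain \<omega> x \<xi>' k"
  by (induction k) auto

lemma jchain_shift: "jchain \<omega> x \<xi> (n + m) = jchain \<omega> (jchain \<omega> x \<xi> n) (\<lambda>k. \<xi> (n + k)) m"
  by (induction m) auto

lemma r_reg_mono: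
  assumes "0 \<le> kr" "1 \<le> a" "a \<le> b" "0 \<le> DS"
  shows "r_reg kr DS a \<le> r_reg kr DS b"
proof -
  have "ln a \<le> ln b" "0 \<le> ln a" using assms by auto
  then have "ln a powr (1 + DS) \<le> ln b powr (1 + DS)" using assms(4) by (intro powr_mono2) auto
  then show ?thesis unfolding r_reg_def using assms(1) by (simp add: mult_left_mono)
qed


interpretation WP: prob_space walk_space by (rule prob_walk)

abbreviation "NG \<equiv> {\<xi> \<in> space walk_space. \<not> Good \<xi>}"

lemma le_meas_union_NG:
  assumes "A \<subseteq> E \<union> NG" "E \<in> sets walk_space"
  shows "measure walk_space A \<le> measure walk_space E"
proof -
  have "measure walk_space A \<le> measure walk_space (E \<union> NG)"
    using assms null_notGood by (intro WP.finite_measure_mono) auto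
  also have "\<dots> \<le> measure walk_space E + measure walk_space NG"
    using assms null_notGood by (intro measure_Un_le) auto
  finally show ?thesis using null_notGood by simp
qed

lemma Pw_le:
  assumes "\<And>\<xi>. Good \<xi> \<Longrightarrow> P (wpath \<omega> x \<xi>) \<Longrightarrow> \<xi> \<in> E" "E \<in> sets walk_space"
  shows "Pw \<omega> x P \<le> measure walk_space E"
  unfolding Pw_def
  by (rule le_meas_union_NG) (use assms in \<open>auto simp: space_walk\<close>)

lemma Pw_ge:
  assumes "\<And>\<xi>. Good \<xi> \<Longrightarrow> \<xi> \<in> E \<Longrightarrow> P (wpath \<omega> x \<xi>)"
    "{\<xi> \<in> space walk_space. P (wpath \<omega> x \<xi>)} \<in> sets walk_space"
  shows "measure walk_space E \<le> Pw \<omega> x P"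
proof (cases "E \<in> sets walk_space")
  case True
  then have "E \<subseteq> space walk_space" by (rule sets.sets_into_space)
  then show ?thesis unfolding Pw_def
    by (intro le_meas_union_NG) (use assms in auto)
next
  case False then show ?thesis by (simp add: measure_notin_sets Pw_def)
qed

lemma sum_le_measure:
  assumes F: "finite F"
    and inc: "\<And>a \<xi>. a \<in> F \<Longrightarrow> Good \<xi> \<Longrightarrow> P a \<xi> \<Longrightarrow> \<xi> \<in> E"
    and disj: "\<And>a b \<xi>. a \<in> F \<Longrightarrow> b \<in> F \<Longrightarrow> P a \<xi> \<Longrightarrow> P b \<xi> \<Longrightarrow> a = b"
    and E: "E \<in> sets walk_space"
  shows "(\<Sum>a\<in>F. measure walk_space {\<xi> \<in> space walk_space. P a \<xi>}) \<le> measure walk_space E"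
proof -
  let ?A = "\<lambda>a. {\<xi> \<in> space walk_space. P a \<xi>}"
  let ?F' = "{a \<in> F. ?A a \<in> sets walk_space}"
  have "(\<Sum>a\<in>F. measure walk_space (?A a)) = (\<Sum>a\<in>?F'. measure walk_space (?A a))"
    using F by (intro sum.mono_neutral_right) (auto simp: measure_notin_sets)
  also have "\<dots> = measure walk_space (\<Union>a\<in>?F'. ?A a)"
    using F disj by (intro WP.finite_measure_finite_Union[symmetric]) (auto simp: disjoint_family_on_def)
  also have "\<dots> \<le> measure walk_space E"
    using inc E by (intro le_meas_union_NG) auto
  finally show ?thesis .
qed

lemma target_incl:
  assumes G: "Good \<xi>" and n: "jchain \<omega> y \<xi> n \<in> Sg" "\<forall>k\<le>n. jchain \<omega> y \<xi> k \<in> B"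
  shows "hitT (wpath \<omega> y \<xi>) Sg < exitT (wpath \<omega> y \<xi>) B"
proof -
  have P: "Pos \<xi>" using G by (rule Good_Pos)
  have J0: "0 \<le> jtime \<xi> n" using jtime_mono[OF P, of 0 n] by simp
  have "hitT (wpath \<omega> y \<xi>) Sg \<le> ereal (jtime \<xi> n)"
    unfolding hitT_def by (rule Inf_lower) (use J0 n in \<open>auto simp: wpath_jtime[OF P]\<close>)
  also have "\<dots> < ereal (jtime \<xi> (Suc n))" using jtime_mono_strict[OF P, of n "Suc n"] by simp
  also have "\<dots> \<le> exitT (wpath \<omega> y \<xi>) B"
    unfolding exitT_def
  proof (rule Inf_greatest)
    fix e assume "e \<in> {ereal t | t. 0 \<le> t \<and> wpath \<omega> y \<xi> t \<notin> B}"
    then obtain t where t: "e = ereal t" "0 \<le> t" "wpath \<omega> y \<xi> t \<notin> B" by blast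
    obtain m where m: "wpath \<omega> y \<xi> t = jchain \<omega> y \<xi> m" "\<forall>k\<le>m. jtime \<xi> k \<le> t"
      using wpath_some[OF P t(2)] by blast
    have "\<not> m \<le> n" using m(1) t(3) n(2) by auto
    then have "jtime \<xi> (Suc n) \<le> t" using m(2) by simp
    then show "ereal (jtime \<xi> (Suc n)) \<le> e" using t(1) by simp
  qed
  finally show ?thesis .
qed

lemma scal_incl:
  assumes G: "Good \<xi>" and h: "hitT (wpath \<omega> z \<xi>) Sg < tauT r (wpath \<omega> z \<xi>)"
  shows "\<exists>m. jchain \<omega> z \<xi> m \<in> Sg \<and> (\<forall>k\<le>m. real_of_int (linfnorm (jchain \<omega> z \<xi> k - z)) < r)"
proof -
  have P: "Pos \<xi>" using G by (rule Good_Pos)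
  obtain e where e: "e \<in> {ereal t | t. 0 \<le> t \<and> wpath \<omega> z \<xi> t \<in> Sg}" "e < tauT r (wpath \<omega> z \<xi>)"
    using h unfolding hitT_def by (auto simp: Inf_less_iff)
  then obtain t where t: "e = ereal t" "0 \<le> t" "wpath \<omega> z \<xi> t \<in> Sg" by blast
  obtain m where m: "wpath \<omega> z \<xi> t = jchain \<omega> z \<xi> m" "\<forall>k\<le>m. jtime \<xi> k \<le> t"
    using wpath_some[OF P t(2)] by blast
  have "real_of_int (linfnorm (jchain \<omega> z \<xi> k - z)) < r" if k: "k \<le> m" for k
  proof (rule ccontr)
    assume "\<not> ?thesis"
    then have "r \<le> real_of_int (linfnorm (wpath \<omega> z \<xi> (jtime \<xi> k) - wpath \<omega> z \<xi> 0))"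
      by (simp add: wpath_jtime[OF P] wpath_0[OF P])
    moreover have "0 \<le> jtime \<xi> k" using jtime_mono[OF P, of 0 k] by simp
    ultimately have "tauT r (wpath \<omega> z \<xi>) \<le> ereal (jtime \<xi> k)"
      unfolding tauT_def by (intro Inf_lower) auto
    also have "\<dots> \<le> ereal t" using m(2) k by simp
    finally show False using e(2) t(1) by simp
  qed
  then show ?thesis using m(1) t(3) by auto
qed

lemma khk_incl:
  assumes G: "Good \<xi>" and t: "0 \<le> t" and h: "wpath \<omega> y \<xi> t = y'" "exitT (wpath \<omega> y \<xi>) B > ereal t"
  shows "\<exists>m. jchain \<omega> y \<xi> m = y' \<and> (\<forall>k\<le>m. jchain \<omega> y \<xi> k \<in> B)"
proof -
  have P: "Pos \<xi>" using G by (rule Good_Pos)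
  obtain m where m: "wpath \<omega> y \<xi> t = jchain \<omega> y \<xi> m" "\<forall>k\<le>m. jtime \<xi> k \<le> t"
    using wpath_some[OF P t] by blast
  have "jchain \<omega> y \<xi> k \<in> B" if k: "k \<le> m" for k
  proof (rule ccontr)
    assume "\<not> ?thesis"
    then have "wpath \<omega> y \<xi> (jtime \<xi> k) \<notin> B" by (simp add: wpath_jtime[OF P])
    moreover have "0 \<le> jtime \<xi> k" using jtime_mono[OF P, of 0 k] by simp
    ultimately have "exitT (wpath \<omega> y \<xi>) B \<le> ereal (jtime \<xi> k)"
      unfolding exitT_def by (intro Inf_lower) auto
    also have "\<dots> \<le> ereal t" using m(2) k by simp
    finally show False using h(2) by simp
  qed
  then show ?thesis using m(1) h(1) by auto
qed


definition Cset :: "(int ^ 'd \<Rightarrow> bool) \<Rightarrow> int ^ 'd \<Rightarrow> (int ^ 'd) set \<Rightarrow> (int ^ 'd) set \<Rightarrow> nat \<Rightarrow> int ^ 'd \<Rightarrow> (nat \<Rightarrow> real \<times> real) set" where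
  "Cset \<omega> y Z BR n z = {\<xi> \<in> space walk_space. jchain \<omega> y \<xi> n = z \<and> (\<forall>k<n. jchain \<omega> y \<xi> k \<notin> Z) \<and> (\<forall>k\<le>n. jchain \<omega> y \<xi> k \<in> BR)}"

definition Gn :: "(int ^ 'd \<Rightarrow> bool) \<Rightarrow> int ^ 'd \<Rightarrow> (int ^ 'd) set \<Rightarrow> (int ^ 'd) set \<Rightarrow> nat \<Rightarrow> (nat \<Rightarrow> real \<times> real) set" where
  "Gn \<omega> y Z BR n0 = {\<xi> \<in> space walk_space. \<exists>n<n0. jchain \<omega> y \<xi> n \<in> Z \<and> (\<forall>k\<le>n. jchain \<omega> y \<xi> k \<in> BR)}"

definition Gset :: "(int ^ 'd \<Rightarrow> bool) \<Rightarrow> int ^ 'd \<Rightarrow> (int ^ 'd) set \<Rightarrow> (int ^ 'd) set \<Rightarrow> (nat \<Rightarrow> real \<times> real) set" where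
  "Gset \<omega> y Z BR = {\<xi> \<in> space walk_space. \<exists>n. jchain \<omega> y \<xi> n \<in> Z \<and> (\<forall>k\<le>n. jchain \<omega> y \<xi> k \<in> BR)}"

definition Dz :: "(int ^ 'd \<Rightarrow> bool) \<Rightarrow> (int ^ 'd) set \<Rightarrow> real \<Rightarrow> int ^ 'd \<Rightarrow> (nat \<Rightarrow> real \<times> real) set" where
  "Dz \<omega> Sg r z = {\<xi> \<in> space walk_space. \<exists>m. jchain \<omega> z \<xi> m \<in> Sg \<and> (\<forall>k\<le>m. real_of_int (linfnorm (jchain \<omega> z \<xi> k - z)) < r)}"

definition Dy :: "(int ^ 'd \<Rightarrow> bool) \<Rightarrow> (int ^ 'd) set \<Rightarrow> (int ^ 'd) set \<Rightarrow> int ^ 'd \<Rightarrow> (nat \<Rightarrow> real \<times> real) set" where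
  "Dy \<omega> Sg B y = {\<xi> \<in> space walk_space. \<exists>n. jchain \<omega> y \<xi> n \<in> Sg \<and> (\<forall>k\<le>n. jchain \<omega> y \<xi> k \<in> B)}"

lemma sets_Cset [measurable]: "Cset \<omega> y Z BR n z \<in> sets walk_space"
  unfolding Cset_def by measurable
lemma sets_Gn [measurable]: "Gn \<omega> y Z BR n0 \<in> sets walk_space"
  unfolding Gn_def by measurable
lemma sets_Gset [measurable]: "Gset \<omega> y Z BR \<in> sets walk_space"
  unfolding Gset_def by measurable
lemma sets_Dz [measurable]: "Dz \<omega> Sg r z \<in> sets walk_space"
  unfolding Dz_def by measurable
lemma sets_Dy [measurable]: "Dy \<omega> Sg B y \<in> sets walk_space"
  unfolding Dy_def by measurable

lemma Gn_union: "Gn \<omega> y Z BR n0 = (\<Union>p\<in>{..<n0} \<times> (Z \<inter> BR). Cset \<omega> y Z BR (fst p) (snd p))"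
proof
  show "Gn \<omega> y Z BR n0 \<subseteq> (\<Union>p\<in>{..<n0} \<times> (Z \<inter> BR). Cset \<omega> y Z BR (fst p) (snd p))"
  proof
    fix \<xi> assume "\<xi> \<in> Gn \<omega> y Z BR n0"
    then obtain n where n: "\<xi> \<in> space walk_space" "n < n0" "jchain \<omega> y \<xi> n \<in> Z" "\<forall>k\<le>n. jchain \<omega> y \<xi> k \<in> BR"
      unfolding Gn_def by blast
    define n' where "n' = (LEAST n. jchain \<omega> y \<xi> n \<in> Z)"
    have n'1: "jchain \<omega> y \<xi> n' \<in> Z" unfolding n'_def by (rule LeastI[of _ n]) (rule n(3))
    have n'2: "n' \<le> n" unfolding n'_def by (rule Least_le) (rule n(3))
    have n'3: "\<forall>k<n'. jchain \<omega> y \<xi> k \<notin> Z" unfolding n'_def using not_less_Least by blast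
    have "\<xi> \<in> Cset \<omega> y Z BR n' (jchain \<omega> y \<xi> n')" "(n', jchain \<omega> y \<xi> n') \<in> {..<n0} \<times> (Z \<inter> BR)"
      using n n'1 n'2 n'3 by (auto simp: Cset_def)
    then show "\<xi> \<in> (\<Union>p\<in>{..<n0} \<times> (Z \<inter> BR). Cset \<omega> y Z BR (fst p) (snd p))"
      by (intro UN_I[of "(n', jchain \<omega> y \<xi> n')"]) simp_all
  qed
  show "(\<Union>p\<in>{..<n0} \<times> (Z \<inter> BR). Cset \<omega> y Z BR (fst p) (snd p)) \<subseteq> Gn \<omega> y Z BR n0"
  proof (rule UN_least)
    fix p assume p: "p \<in> {..<n0} \<times> (Z \<inter> BR)"
    show "Cset \<omega> y Z BR (fst p) (snd p) \<subseteq> Gn \<omega> y Z BR n0"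
    proof
      fix \<xi> assume "\<xi> \<in> Cset \<omega> y Z BR (fst p) (snd p)"
      then have "\<xi> \<in> space walk_space" "jchain \<omega> y \<xi> (fst p) = snd p" "\<forall>k\<le>fst p. jchain \<omega> y \<xi> k \<in> BR"
        unfolding Cset_def by blast+
      moreover have "fst p < n0" "snd p \<in> Z" using p by auto
      ultimately show "\<xi> \<in> Gn \<omega> y Z BR n0" unfolding Gn_def by auto
    qed
  qed
qed

lemma Cset_disj:
  assumes "\<xi> \<in> Cset \<omega> y Z BR n z" "\<xi> \<in> Cset \<omega> y Z BR n' z'" "z \<in> Z" "z' \<in> Z"
  shows "n = n' \<and> z = z'"
proof -
  have "\<not> n < n'" using assms by (auto simp: Cset_def)
  moreover have "\<not> n' < n" using assms by (auto simp: Cset_def)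
  ultimately have "n = n'" by simp
  then show ?thesis using assms by (auto simp: Cset_def)
qed

lemma markov_bound:
  assumes fin: "finite BR"
    and Dz_ge: "\<And>z. z \<in> Z \<Longrightarrow> z \<in> BR \<Longrightarrow> ch \<le> measure walk_space (Dz \<omega> Sg r z)"
    and ch: "0 \<le> ch"
    and near: "\<And>z w. z \<in> BR \<Longrightarrow> real_of_int (linfnorm (w - z)) < r \<Longrightarrow> w \<in> B5"
    and sub: "BR \<subseteq> B5"
  shows "ch * measure walk_space (Gset \<omega> y Z BR) \<le> measure walk_space (Dy \<omega> Sg B5 y)"
proof -
  let ?M = "measure walk_space"
  have step: "ch * ?M (Gn \<omega> y Z BR n0) \<le> ?M (Dy \<omega> Sg B5 y)" for n0
  proof -
    let ?I = "{..<n0} \<times> (Z \<inter> BR)"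
    let ?C = "\<lambda>p. Cset \<omega> y Z BR (fst p) (snd p)"
    let ?H = "\<lambda>p. {\<xi> \<in> ?C p. (\<lambda>k. \<xi> (fst p + k)) \<in> Dz \<omega> Sg r (snd p)}"
    have finI: "finite ?I" using fin by auto
    have disjC: "disjoint_family_on ?C ?I"
    proof (unfold disjoint_family_on_def, intro ballI impI)
      fix p q assume p: "p \<in> ?I" and q: "q \<in> ?I" and pq: "p \<noteq> q"
      show "?C p \<inter> ?C q = {}"
      proof (rule ccontr)
        assume "?C p \<inter> ?C q \<noteq> {}"
        then obtain \<xi> where "\<xi> \<in> ?C p" "\<xi> \<in> ?C q" by blast
        then have "fst p = fst q \<and> snd p = snd q"
          using Cset_disj[of \<xi> \<omega> y Z BR "fst p" "snd p" "fst q" "snd q"] p q by auto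
        then show False using pq by (simp add: prod_eq_iff)
      qed
    qed
    have disjH: "disjoint_family_on ?H ?I"
      using disjC by (rule disjoint_family_on_bisimulation) blast
    have Hsets: "?H p \<in> sets walk_space" for p
    proof -
      have "?H p = ?C p \<inter> ((\<lambda>\<xi>. \<lambda>k. \<xi> (fst p + k)) -` Dz \<omega> Sg r (snd p) \<inter> space walk_space)"
        using sets.sets_into_space[OF sets_Cset[of \<omega> y Z BR "fst p" "snd p"]] by blast
      also have "\<dots> \<in> sets walk_space"
        using meas_shift[of "fst p"] by (intro sets.Int sets_Cset measurable_sets[OF _ sets_Dz])
      finally show ?thesis .
    qed
    have "ch * ?M (Gn \<omega> y Z BR n0) = ch * (\<Sum>p\<in>?I. ?M (?C p))"
      unfolding Gn_union using finI disjC by (subst WP.finite_measure_finite_Union) auto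
    also have "\<dots> = (\<Sum>p\<in>?I. ch * ?M (?C p))" by (simp add: sum_distrib_left)
    also have "\<dots> \<le> (\<Sum>p\<in>?I. ?M (?C p) * ?M (Dz \<omega> Sg r (snd p)))"
    proof (rule sum_mono)
      fix p assume p: "p \<in> ?I"
      then have h: "ch \<le> ?M (Dz \<omega> Sg r (snd p))" using Dz_ge by auto
      show "ch * ?M (?C p) \<le> ?M (?C p) * ?M (Dz \<omega> Sg r (snd p))"
      proof -
        have "ch * ?M (?C p) \<le> ?M (Dz \<omega> Sg r (snd p)) * ?M (?C p)"
          by (rule mult_right_mono[OF h measure_nonneg])
        then show ?thesis by (metis mult.commute)
      qed
    qed
    also have "\<dots> = (\<Sum>p\<in>?I. ?M (?H p))"
    proof (intro sum.cong refl)
      fix p assume "p \<in> ?I"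
      show "?M (?C p) * ?M (Dz \<omega> Sg r (snd p)) = ?M (?H p)"
      proof (rule indep_shift[symmetric])
        fix \<xi> \<xi>' :: "nat \<Rightarrow> real \<times> real" assume ag: "\<forall>k<fst p. \<xi> k = \<xi>' k"
        have "jchain \<omega> y \<xi> k = jchain \<omega> y \<xi>' k" if "k \<le> fst p" for k
          using ag that by (intro jchain_local) auto
        then show "\<xi> \<in> ?C p \<longleftrightarrow> \<xi>' \<in> ?C p" by (auto simp: Cset_def space_walk)
      qed auto
    qed
    also have "\<dots> = ?M (\<Union>p\<in>?I. ?H p)"
      using finI disjH Hsets by (subst WP.finite_measure_finite_Union) auto
    also have "\<dots> \<le> ?M (Dy \<omega> Sg B5 y)"
    proof (rule WP.finite_measure_mono[OF _ sets_Dy])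
      show "(\<Union>p\<in>?I. ?H p) \<subseteq> Dy \<omega> Sg B5 y"
      proof
        fix \<xi> assume "\<xi> \<in> (\<Union>p\<in>?I. ?H p)"
        then obtain p where p: "p \<in> ?I" "\<xi> \<in> ?H p" by blast
        obtain n z where nzp: "p = (n, z)" by (cases p)
        have nz: "z \<in> BR" "\<xi> \<in> Cset \<omega> y Z BR n z" "(\<lambda>k. \<xi> (n + k)) \<in> Dz \<omega> Sg r z"
          using p unfolding nzp by auto
        have c: "jchain \<omega> y \<xi> n = z" "\<forall>k\<le>n. jchain \<omega> y \<xi> k \<in> BR" "\<xi> \<in> space walk_space"
          using nz(2) unfolding Cset_def by blast+
        obtain m where m: "jchain \<omega> z (\<lambda>k. \<xi> (n + k)) m \<in> Sg"
          "\<forall>k\<le>m. real_of_int (linfnorm (jchain \<omega> z (\<lambda>k. \<xi> (n + k)) k - z)) < r"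
          using nz(3) unfolding Dz_def by blast
        have js: "jchain \<omega> y \<xi> (n + j) = jchain \<omega> z (\<lambda>k. \<xi> (n + k)) j" for j
          using jchain_shift[of \<omega> y \<xi> n j] c(1) by simp
        have "jchain \<omega> y \<xi> k \<in> B5" if k: "k \<le> n + m" for k
        proof (cases "k \<le> n")
          case True then show ?thesis using c(2) sub by blast
        next
          case False
          define j where "j = k - n"
          have j: "k = n + j" "j \<le> m" using k False unfolding j_def by auto
          have "real_of_int (linfnorm (jchain \<omega> z (\<lambda>k. \<xi> (n + k)) j - z)) < r"
            using m(2) j(2) by blast
          then have "real_of_int (linfnorm (jchain \<omega> y \<xi> k - z)) < r"
            unfolding j(1) js .
          then show ?thesis by (rule near[OF nz(1)])
        qed
        moreover have "jchain \<omega> y \<xi> (n + m) \<in> Sg" using js m(1) by simp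
        ultimately show "\<xi> \<in> Dy \<omega> Sg B5 y" using c(3) unfolding Dy_def by blast
      qed
    qed
    finally show ?thesis .
  qed
  have inc: "incseq (Gn \<omega> y Z BR)"
  proof (rule monoI)
    fix m n :: nat assume mn: "m \<le> n"
    show "Gn \<omega> y Z BR m \<le> Gn \<omega> y Z BR n"
    proof
      fix \<xi> assume "\<xi> \<in> Gn \<omega> y Z BR m"
      then obtain k where k: "\<xi> \<in> space walk_space" "k < m" "jchain \<omega> y \<xi> k \<in> Z" "\<forall>j\<le>k. jchain \<omega> y \<xi> j \<in> BR"
        unfolding Gn_def by blast
      have "k < n" using k(2) mn by simp
      then show "\<xi> \<in> Gn \<omega> y Z BR n" using k unfolding Gn_def by blast
    qed
  qed
  have un: "(\<Union>n0. Gn \<omega> y Z BR n0) = Gset \<omega> y Z BR"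
    unfolding Gn_def Gset_def by blast
  have "(\<lambda>n0. ?M (Gn \<omega> y Z BR n0)) \<longlonglongrightarrow> ?M (Gset \<omega> y Z BR)"
  proof -
    have r: "range (Gn \<omega> y Z BR) \<subseteq> sets walk_space" using sets_Gn by blast
    show ?thesis using WP.finite_Lim_measure_incseq[OF r inc] unfolding un .
  qed
  then have "(\<lambda>n0. ch * ?M (Gn \<omega> y Z BR n0)) \<longlonglongrightarrow> ch * ?M (Gset \<omega> y Z BR)"
    by (rule tendsto_mult_left)
  then show ?thesis using step by (intro LIMSEQ_le_const2) auto
qed


lemma crossing:
  assumes G: "Good \<xi>" and y: "y \<in> Sinf \<omega>" and U0: "U0 \<subseteq> Sinf \<omega>"
    and n: "jchain \<omega> y \<xi> n \<in> (if y \<in> U0 then U1 \<omega> U0 else U0)"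
  shows "\<exists>m\<le>n. jchain \<omega> y \<xi> m \<in> Sbd \<omega> U0"
proof -
  let ?Y = "jchain \<omega> y \<xi>"
  have S: "?Y k \<in> Sinf \<omega>" for k using jchain_Sinf[OF G y] by blast
  have A: "?Y (Suc k) = ?Y k \<or> adj (?Y k) (?Y (Suc k))" for k using jchain_Sinf[OF G y] by blast
  show ?thesis
  proof (cases "y \<in> U0")
    case True
    then have nn: "?Y n \<notin> U0" using n by (simp add: U1_def)
    define m where "m = (LEAST m. ?Y m \<notin> U0)"
    have m1: "?Y m \<notin> U0" unfolding m_def by (rule LeastI[of _ n]) (rule nn)
    have m2: "m \<le> n" unfolding m_def by (rule Least_le) (rule nn)
    have m0: "m \<noteq> 0"
    proof
      assume "m = 0" then show False using m1 True by simp
    qed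
    then obtain m' where m': "m = Suc m'" by (cases m) auto
    have "m' < m" using m' by simp
    then have i: "?Y m' \<in> U0" using not_less_Least[of m' "\<lambda>m. ?Y m \<notin> U0"] unfolding m_def by blast
    then have "?Y m \<noteq> ?Y m'" using m1 by auto
    then have "adj (?Y m') (?Y m)" using A[of m'] m' by auto
    then have "adj (?Y m) (?Y m')" by (simp add: adj_sym)
    then have "?Y m \<in> Sbd \<omega> U0" using m1 S[of m] i by (auto simp: Sbd_def U1_def)
    then show ?thesis using m2 by blast
  next
    case False
    then have nn: "?Y n \<in> U0" using n by simp
    define m where "m = (LEAST m. ?Y m \<in> U0)"
    have m1: "?Y m \<in> U0" unfolding m_def by (rule LeastI[of _ n]) (rule nn)
    have m2: "m \<le> n" unfolding m_def by (rule Least_le) (rule nn)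
    have m0: "m \<noteq> 0"
    proof
      assume "m = 0" then show False using m1 False by simp
    qed
    then obtain m' where m': "m = Suc m'" by (cases m) auto
    have "m' < m" using m' by simp
    then have i: "?Y m' \<notin> U0" using not_less_Least[of m' "\<lambda>m. ?Y m \<in> U0"] unfolding m_def by blast
    then have "?Y m \<noteq> ?Y m'" using m1 by auto
    then have "adj (?Y m') (?Y m)" using A[of m'] m' by auto
    then have "?Y m' \<in> Sbd \<omega> U0" using m1 S[of m'] i by (auto simp: Sbd_def U1_def)
    then show ?thesis using m2 m' by (intro exI[of _ m']) auto
  qed
qed


lemma powr_Rn: "0 < (R::real) \<Longrightarrow> (R ^ 2) powr (- real d / 2) = 1 / R ^ d"
proof -
  assume R: "0 < R"
  have "(R ^ 2) powr (- real d / 2) = (R powr 2) powr (- real d / 2)" using R by (simp add: powr_realpow)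
  also have "\<dots> = R powr (- real d)" by (simp add: powr_powr)
  also have "\<dots> = 1 / R ^ d" using R by (simp add: powr_minus powr_realpow divide_inverse)
  finally show ?thesis .
qed

lemma main_bound:
  fixes \<omega> :: "int ^ 'd \<Rightarrow> bool" and U0 Sg :: "(int ^ 'd) set" and x0 y :: "int ^ 'd"
    and l \<epsilon> R0k :: nat
  assumes eta: "0 < \<eta>" and ck1: "0 < ck1" and ck2: "ck2 \<le> 1" and kr: "0 < kr" and DS: "0 < DS"
    and den: "(1 - 1/3) * \<eta> \<le> real (card (Sinf \<omega> \<inter> ballinf x0 (4 * 2 ^ l))) / real (card (ballinf x0 (4 * 2 ^ l)))"
    and khk: "\<forall>R::nat\<ge>R0k.
     \<forall>x0 \<in> Sinf \<omega> \<inter> ballinf 0 (r_reg kr DS (real R)).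
     \<forall>x \<in> Sinf \<omega> \<inter> ballinf x0 ((1 - 1/9) * real R).
     \<forall>y \<in> Sinf \<omega> \<inter> ballinf x0 ((1 - 1/9) * real R).
     \<forall>t. ck2 * real R ^ 2 \<le> t \<and> t \<le> real R ^ 2 \<longrightarrow>
       Pw \<omega> x (\<lambda>X. X t = y \<and> exitT X (ballinf x0 (real R) \<inter> Sinf \<omega>) > ereal t) / deg \<omega> y
         \<ge> ck1 * t powr (- real CARD('d) / 2)"
    and R0k: "R0k \<le> l" and l1: "1 \<le> l"
    and U0: "U0 \<subseteq> Sinf \<omega>" and Sg: "Sg \<in> Scal \<omega> U0 \<epsilon> ch" and ch: "0 \<le> ch"
    and eps: "real \<epsilon> \<le> 2 ^ l / 4"
    and x0: "x0 \<in> Sinf \<omega> \<inter> ballinf 0 (r_reg kr DS (4 * 2 ^ l))"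
    and sig1: "alphat TYPE('d) \<le> sigmat \<omega> U0 l x0" and sig2: "sigmat \<omega> U0 l x0 \<le> 1 - alphat TYPE('d)"
    and y: "y \<in> Sinf \<omega>" and yx0: "eucl (y - x0) \<le> 2 ^ l / 4"
  shows "ch * (alphat TYPE('d) * (2/3) * \<eta> * ck1) \<le> Pw \<omega> y (\<lambda>X. hitT X Sg < exitT X (ballinf x0 (5 * 2 ^ l)))"
proof -
  define P :: nat where "P = 2 ^ (l - 1)"
  have P1: "1 \<le> P" unfolding P_def by simp
  have hP: "(2::real) ^ l = 2 * real P"
    using l1 unfolding P_def by (cases l) auto
  have lP: "l \<le> 2 * P"
  proof -
    have "l < 2 ^ l" by (rule less_exp)
    also have "(2::nat) ^ l = 2 * P" using l1 unfolding P_def by (cases l) auto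
    finally show ?thesis by simp
  qed
  define Rn :: nat where "Rn = 9 * P"
  have RnR0: "R0k \<le> Rn" using R0k lP unfolding Rn_def by simp
  have Rnpos: "0 < real Rn" using P1 unfolding Rn_def by simp
  define B4 where "B4 = ballinf x0 (4 * 2 ^ l)"
  define BR where "BR = ballinf x0 (real Rn)"
  define B5 where "B5 = ballinf x0 (5 * 2 ^ l)"
  define V where "V = (if y \<in> U0 then U1 \<omega> U0 else U0)"
  define t :: real where "t = real Rn ^ 2"
  define \<alpha> where "\<alpha> = alphat TYPE('d)"
  have \<alpha>pos: "0 < \<alpha>" unfolding \<alpha>_def alphat_def by simp
  define NS where "NS = card (B4 \<inter> Sinf \<omega>)"
  have finB4: "finite B4" unfolding B4_def by (rule finite_ballinf)
  have cardB4: "real Rn ^ CARD('d) \<le> real (card B4)"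
  proof -
    have "B4 = ballinf x0 (real (8 * P))" unfolding B4_def hP by simp
    then have "real (2 * (8 * P) + 1) ^ CARD('d) \<le> real (card B4)"
      using card_ballinf_ge[of "8 * P" x0] by simp
    moreover have "real Rn ^ CARD('d) \<le> real (2 * (8 * P) + 1) ^ CARD('d)"
      unfolding Rn_def by (intro power_mono) auto
    ultimately show ?thesis by linarith
  qed
  have cB4pos: "0 < real (card B4)"
    using cardB4 Rnpos by (meson less_le_trans zero_less_power)
  have NSge: "(2/3) * \<eta> * real (card B4) \<le> real NS"
  proof -
    have "(2/3) * \<eta> \<le> real NS / real (card B4)"
      using den unfolding NS_def B4_def by (simp add: Int_commute)
    then show ?thesis using cB4pos by (simp add: field_simps)
  qed
  have NSpos: "0 < real NS"
  proof -
    have "0 < 2/3 * \<eta> * real (card B4)" using eta cB4pos by simp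
    then show ?thesis using NSge by linarith
  qed
  have cardV: "\<alpha> * real NS \<le> real (card (B4 \<inter> V))"
  proof -
    have sdef: "sigmat \<omega> U0 l x0 = real (card (B4 \<inter> U1 \<omega> U0)) / real NS"
      unfolding sigmat_def B4_def NS_def ..
    have fin1: "finite (B4 \<inter> U1 \<omega> U0)" using finB4 by simp
    have sub1: "B4 \<inter> U1 \<omega> U0 \<subseteq> B4 \<inter> Sinf \<omega>" by (auto simp: U1_def)
    show ?thesis
    proof (cases "y \<in> U0")
      case True
      have "\<alpha> \<le> real (card (B4 \<inter> U1 \<omega> U0)) / real NS" using sig1 sdef \<alpha>_def by simp
      then show ?thesis using True NSpos unfolding V_def by (simp add: field_simps)
    next
      case False
      have eq: "B4 \<inter> U0 = (B4 \<inter> Sinf \<omega>) - (B4 \<inter> U1 \<omega> U0)" using U0 by (auto simp: U1_def)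
      have "real (card (B4 \<inter> U0)) = real NS - real (card (B4 \<inter> U1 \<omega> U0))"
        unfolding eq NS_def using card_Diff_subset[OF fin1 sub1] card_mono[OF _ sub1] finB4
        by (simp add: of_nat_diff)
      moreover have "real (card (B4 \<inter> U1 \<omega> U0)) / real NS \<le> 1 - \<alpha>" using sig2 sdef \<alpha>_def by simp
      then have "real (card (B4 \<inter> U1 \<omega> U0)) \<le> (1 - \<alpha>) * real NS" using NSpos by (simp add: field_simps)
      ultimately show ?thesis using False unfolding V_def by (simp add: algebra_simps)
    qed
  qed
  have x0R: "x0 \<in> Sinf \<omega> \<inter> ballinf 0 (r_reg kr DS (real Rn))"
  proof -
    have "r_reg kr DS (4 * 2 ^ l) \<le> r_reg kr DS (real Rn)"
      using kr DS P1 unfolding Rn_def hP by (intro r_reg_mono) auto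
    then show ?thesis using x0 by (auto simp: ballinf_def)
  qed
  have e89: "(1 - 1/9) * real Rn = 4 * 2 ^ l" unfolding Rn_def hP by simp
  have yB4: "y \<in> B4"
  proof -
    have "real_of_int (linfnorm (y - x0)) \<le> 2 ^ l / 4" using linf_le_eucl[of "y - x0"] yx0 by simp
    moreover have "(0::real) \<le> 2 ^ l" by simp
    ultimately have "real_of_int (linfnorm (y - x0)) \<le> 4 * 2 ^ l" by linarith
    then show ?thesis unfolding B4_def ballinf_def by simp
  qed
  have Pwy': "ck1 / real Rn ^ CARD('d) \<le> Pw \<omega> y (\<lambda>X. X t = y' \<and> exitT X (BR \<inter> Sinf \<omega>) > ereal t)"
    if y': "y' \<in> B4 \<inter> V" for y'
  proof -
    have y'S: "y' \<in> Sinf \<omega>" using y' U0 unfolding V_def by (auto simp: U1_def split: if_splits)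
    have tt: "ck2 * real Rn ^ 2 \<le> t \<and> t \<le> real Rn ^ 2"
      unfolding t_def using mult_right_mono[OF ck2, of "real Rn ^ 2"] by simp
    have h: "ck1 * t powr (- real CARD('d) / 2) \<le> Pw \<omega> y (\<lambda>X. X t = y' \<and> exitT X (BR \<inter> Sinf \<omega>) > ereal t) / deg \<omega> y'"
    proof -
      have yin: "y \<in> Sinf \<omega> \<inter> ballinf x0 ((1 - 1/9) * real Rn)" using y yB4 unfolding e89 B4_def by simp
      have y'in: "y' \<in> Sinf \<omega> \<inter> ballinf x0 ((1 - 1/9) * real Rn)" using y' y'S unfolding e89 B4_def by simp
      show ?thesis unfolding BR_def by (rule khk[rule_format, OF RnR0 x0R yin y'in tt])
    qed
    have tp: "t powr (- real CARD('d) / 2) = 1 / real Rn ^ CARD('d)"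
      unfolding t_def by (rule powr_Rn[OF Rnpos])
    let ?p = "Pw \<omega> y (\<lambda>X. X t = y' \<and> exitT X (BR \<inter> Sinf \<omega>) > ereal t)"
    have c0: "0 < ck1 / real Rn ^ CARD('d)" using ck1 Rnpos by simp
    have h2: "ck1 / real Rn ^ CARD('d) \<le> ?p / deg \<omega> y'" using h tp by simp
    have dpos: "0 < deg \<omega> y'"
    proof (rule ccontr)
      assume "\<not> 0 < deg \<omega> y'"
      then have "deg \<omega> y' = 0" unfolding deg_def by simp
      then show False using h2 c0 by simp
    qed
    then have d1: "1 \<le> deg \<omega> y'" unfolding deg_def by simp
    have "ck1 / real Rn ^ CARD('d) * deg \<omega> y' \<le> ?p" using h2 dpos by (simp add: field_simps)
    moreover have "ck1 / real Rn ^ CARD('d) \<le> ck1 / real Rn ^ CARD('d) * deg \<omega> y'"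
      using mult_left_mono[OF d1 less_imp_le[OF c0]] by simp
    ultimately show ?thesis by linarith
  qed
  have finV: "finite (B4 \<inter> V)" using finB4 by simp
  have GK: "\<alpha> * (2/3) * \<eta> * ck1 \<le> measure walk_space (Gset \<omega> y (Sbd \<omega> U0) BR)"
  proof -
    have "\<alpha> * (2/3) * \<eta> * ck1 \<le> \<alpha> * ((2/3) * \<eta> * real (card B4)) * ck1 / real Rn ^ CARD('d)"
    proof -
      have "1 \<le> real (card B4) / real Rn ^ CARD('d)" using cardB4 Rnpos by simp
      then have "\<alpha> * (2/3) * \<eta> * ck1 * 1 \<le> \<alpha> * (2/3) * \<eta> * ck1 * (real (card B4) / real Rn ^ CARD('d))"
        using \<alpha>pos eta ck1 by (intro mult_left_mono) auto
      then show ?thesis by (simp add: field_simps)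
    qed
    also have "\<dots> \<le> \<alpha> * real NS * ck1 / real Rn ^ CARD('d)"
      using NSge \<alpha>pos ck1 Rnpos by (intro divide_right_mono mult_right_mono mult_left_mono) auto
    also have "\<dots> \<le> real (card (B4 \<inter> V)) * (ck1 / real Rn ^ CARD('d))"
    proof -
      have "\<alpha> * real NS * ck1 \<le> real (card (B4 \<inter> V)) * ck1"
        using mult_right_mono[OF cardV] ck1 by simp
      then have "\<alpha> * real NS * ck1 / real Rn ^ CARD('d) \<le> real (card (B4 \<inter> V)) * ck1 / real Rn ^ CARD('d)"
        using Rnpos by (intro divide_right_mono) auto
      then show ?thesis by simp
    qed
    also have "\<dots> = (\<Sum>y'\<in>B4 \<inter> V. ck1 / real Rn ^ CARD('d))" by simp
    also have "\<dots> \<le> (\<Sum>y'\<in>B4 \<inter> V. Pw \<omega> y (\<lambda>X. X t = y' \<and> exitT X (BR \<inter> Sinf \<omega>) > ereal t))"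
      by (rule sum_mono) (rule Pwy')
    also have "\<dots> \<le> measure walk_space (Gset \<omega> y (Sbd \<omega> U0) BR)"
      unfolding Pw_def
    proof (rule sum_le_measure[OF finV _ _ sets_Gset])
      fix a \<xi> assume a: "a \<in> B4 \<inter> V" and G: "Good \<xi>"
        and Pa: "wpath \<omega> y \<xi> t = a \<and> ereal t < exitT (wpath \<omega> y \<xi>) (BR \<inter> Sinf \<omega>)"
      obtain m where m: "jchain \<omega> y \<xi> m = a" "\<forall>k\<le>m. jchain \<omega> y \<xi> k \<in> BR \<inter> Sinf \<omega>"
      proof -
        have t0: "0 \<le> t" unfolding t_def by simp
        show ?thesis using khk_incl[OF G t0 conjunct1[OF Pa] conjunct2[OF Pa]] that by blast
      qed
      have "jchain \<omega> y \<xi> m \<in> (if y \<in> U0 then U1 \<omega> U0 else U0)" using m(1) a unfolding V_def by auto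
      then obtain m' where m': "m' \<le> m" "jchain \<omega> y \<xi> m' \<in> Sbd \<omega> U0"
        using crossing[OF G y U0] by blast
      have "\<forall>k\<le>m'. jchain \<omega> y \<xi> k \<in> BR" using m(2) m'(1) by auto
      then show "\<xi> \<in> Gset \<omega> y (Sbd \<omega> U0) BR" using m'(2) unfolding Gset_def space_walk by blast
    qed auto
    finally show ?thesis unfolding \<alpha>_def .
  qed
  have Sgp: "\<forall>x \<in> Sbd \<omega> U0. ch \<le> Pw \<omega> x (\<lambda>X. hitT X Sg < tauT (real \<epsilon>) X)"
    using Sg unfolding Scal_def by blast
  have MB: "ch * measure walk_space (Gset \<omega> y (Sbd \<omega> U0) BR) \<le> measure walk_space (Dy \<omega> Sg B5 y)"
  proof (rule markov_bound)
    show "finite BR" unfolding BR_def by (rule finite_ballinf)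
    show "0 \<le> ch" by (rule ch)
    fix z assume z: "z \<in> Sbd \<omega> U0" "z \<in> BR"
    have "ch \<le> Pw \<omega> z (\<lambda>X. hitT X Sg < tauT (real \<epsilon>) X)" using Sgp z by blast
    also have "\<dots> \<le> measure walk_space (Dz \<omega> Sg (real \<epsilon>) z)"
    proof (rule Pw_le[OF _ sets_Dz])
      fix \<xi> assume "Good \<xi>" "hitT (wpath \<omega> z \<xi>) Sg < tauT (real \<epsilon>) (wpath \<omega> z \<xi>)"
      then show "\<xi> \<in> Dz \<omega> Sg (real \<epsilon>) z"
        using scal_incl unfolding Dz_def space_walk by blast
    qed
    finally show "ch \<le> measure walk_space (Dz \<omega> Sg (real \<epsilon>) z)" .
  next
    fix z w assume z: "z \<in> BR" and w: "real_of_int (linfnorm (w - z)) < real \<epsilon>"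
    have "linfnorm (w - x0) \<le> linfnorm (w - z) + linfnorm (z - x0)"
      using linf_triangle[of "w - z" "z - x0"] by simp
    moreover have "real_of_int (linfnorm (z - x0)) \<le> real Rn" using z unfolding BR_def ballinf_def by simp
    moreover have "real \<epsilon> \<le> real P / 2" using eps hP by simp
    ultimately have "real_of_int (linfnorm (w - x0)) \<le> 5 * 2 ^ l"
      using w unfolding Rn_def hP by simp
    then show "w \<in> B5" unfolding B5_def ballinf_def by simp
  next
    show "BR \<subseteq> B5" unfolding BR_def B5_def ballinf_def Rn_def hP by auto
  qed
  have "measure walk_space (Dy \<omega> Sg B5 y) \<le> Pw \<omega> y (\<lambda>X. hitT X Sg < exitT X B5)"
  proof (rule Pw_ge)
    fix \<xi> assume "Good \<xi>" "\<xi> \<in> Dy \<omega> Sg B5 y"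
    then show "hitT (wpath \<omega> y \<xi>) Sg < exitT (wpath \<omega> y \<xi>) B5"
      using target_incl unfolding Dy_def by blast
  qed (rule meas_hit_exit)
  moreover have "ch * (\<alpha> * (2/3) * \<eta> * ck1) \<le> ch * measure walk_space (Gset \<omega> y (Sbd \<omega> U0) BR)"
    using GK ch unfolding \<alpha>_def by (intro mult_left_mono) auto
  ultimately show ?thesis using MB unfolding B5_def \<alpha>_def by linarith
qed


theorem lemma4p12:
  fixes \<eta> kr DS c1 c2 c3 c4 ck1 ck2 :: real
    and A :: "(real ^ 'd) set" and b :: "nat \<Rightarrow> real"
  assumes "CARD('d::finite) \<ge> 3"
    and "0 < \<eta>" "\<eta> \<le> 1" "0 < kr" "0 < DS"
    and "0 < c1" "0 < c2" "0 < c3" "0 < c4" "0 < ck1" "0 < ck2" "ck2 \<le> 1"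
    and "compact A" "\<forall>N. 0 < b N"
  shows "\<exists>c5 :: real \<Rightarrow> real. (\<forall>ch. 0 < ch \<and> ch < 1 \<longrightarrow> 0 < c5 ch) \<and>
    (\<forall>\<omega> \<in> Omega_reg (1/3) (1/9) \<eta> kr DS c1 c2 c3 c4 ck1 ck2.
      \<exists>c4' :: real. \<forall>(N::nat) (ls::nat) (U0 :: (int ^ 'd) set) (\<epsilon>::nat) (ch::real) Sg (l::nat) x0 y.
        1 \<le> N \<longrightarrow> U0 \<in> Ucal \<omega> A b ls N \<longrightarrow> 0 < ch \<longrightarrow> ch < 1 \<longrightarrow>
        Sg \<in> Scal \<omega> U0 \<epsilon> ch \<longrightarrow> c4' \<le> real l \<longrightarrow> real \<epsilon> \<le> 2 ^ l / 4 \<longrightarrow>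
        x0 \<in> Sinf \<omega> \<inter> ballinf 0 (r_reg kr DS (4 * 2 ^ l)) \<longrightarrow>
        alphat TYPE('d) \<le> sigmat \<omega> U0 l x0 \<longrightarrow> sigmat \<omega> U0 l x0 \<le> 1 - alphat TYPE('d) \<longrightarrow>
        y \<in> Sinf \<omega> \<longrightarrow> eucl (y - x0) \<le> 2 ^ l / 4 \<longrightarrow>
        c5 ch \<le> Pw \<omega> y (\<lambda>X. hitT X Sg < exitT X (ballinf x0 (5 * 2 ^ l))))"
proof -
  have Kpos: "0 < alphat TYPE('d) * (2/3) * \<eta> * ck1" using assms by (simp add: alphat_def)
  show ?thesis
  proof (intro exI[of _ "\<lambda>ch. ch * (alphat TYPE('d) * (2/3) * \<eta> * ck1)"] conjI ballI allI impI)
    fix ch :: real assume "0 < ch \<and> ch < 1" then show "0 < ch * (alphat TYPE('d) * (2/3) * \<eta> * ck1)"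
      using Kpos by simp
  next
    fix \<omega> :: "int ^ 'd \<Rightarrow> bool" assume \<omega>: "\<omega> \<in> Omega_reg (1/3) (1/9) \<eta> kr DS c1 c2 c3 c4 ck1 ck2"
    then have den: "den_ok \<omega> (1/3) \<eta> kr DS" and khk: "khk_ok \<omega> (1/9) kr DS ck1 ck2"
      by (auto simp: Omega_reg_def)
    obtain R0d :: real where R0d: "\<forall>R\<ge>R0d. \<forall>x \<in> Sinf \<omega> \<inter> ballinf 0 (r_reg kr DS R).
     (1 - 1/3) * \<eta> \<le> real (card (Sinf \<omega> \<inter> ballinf x R)) / real (card (ballinf x R)) \<and>
     real (card (Sinf \<omega> \<inter> ballinf x R)) / real (card (ballinf x R)) \<le> (1 + 1/3) * \<eta>"
      using den unfolding den_ok_def by blast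
    obtain R0k :: nat where R0k: "\<forall>R::nat\<ge>R0k.
     \<forall>x0 \<in> Sinf \<omega> \<inter> ballinf 0 (r_reg kr DS (real R)).
     \<forall>x \<in> Sinf \<omega> \<inter> ballinf x0 ((1 - 1/9) * real R).
     \<forall>y \<in> Sinf \<omega> \<inter> ballinf x0 ((1 - 1/9) * real R).
     \<forall>t. ck2 * real R ^ 2 \<le> t \<and> t \<le> real R ^ 2 \<longrightarrow>
       Pw \<omega> x (\<lambda>X. X t = y \<and> exitT X (ballinf x0 (real R) \<inter> Sinf \<omega>) > ereal t) / deg \<omega> y
         \<ge> ck1 * t powr (- real CARD('d) / 2)"
      using khk unfolding khk_ok_def by blast
    show "\<exists>c4' :: real. \<forall>(N::nat) (ls::nat) (U0 :: (int ^ 'd) set) (\<epsilon>::nat) (ch::real) Sg (l::nat) x0 y.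
        1 \<le> N \<longrightarrow> U0 \<in> Ucal \<omega> A b ls N \<longrightarrow> 0 < ch \<longrightarrow> ch < 1 \<longrightarrow>
        Sg \<in> Scal \<omega> U0 \<epsilon> ch \<longrightarrow> c4' \<le> real l \<longrightarrow> real \<epsilon> \<le> 2 ^ l / 4 \<longrightarrow>
        x0 \<in> Sinf \<omega> \<inter> ballinf 0 (r_reg kr DS (4 * 2 ^ l)) \<longrightarrow>
        alphat TYPE('d) \<le> sigmat \<omega> U0 l x0 \<longrightarrow> sigmat \<omega> U0 l x0 \<le> 1 - alphat TYPE('d) \<longrightarrow>
        y \<in> Sinf \<omega> \<longrightarrow> eucl (y - x0) \<le> 2 ^ l / 4 \<longrightarrow>
        ch * (alphat TYPE('d) * (2/3) * \<eta> * ck1) \<le> Pw \<omega> y (\<lambda>X. hitT X Sg < exitT X (ballinf x0 (5 * 2 ^ l)))"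
    proof (intro exI[of _ "\<bar>R0d\<bar> + real R0k + 1"] allI impI)
      fix N ls :: nat and U0 :: "(int ^ 'd) set" and \<epsilon> :: nat and ch :: real and Sg and l :: nat and x0 y
      assume h1: "1 \<le> N" and h2: "U0 \<in> Ucal \<omega> A b ls N" and h3: "0 < ch" and h4: "ch < 1"
        and h5: "Sg \<in> Scal \<omega> U0 \<epsilon> ch" and h6: "\<bar>R0d\<bar> + real R0k + 1 \<le> real l"
        and h7: "real \<epsilon> \<le> 2 ^ l / 4" and h8: "x0 \<in> Sinf \<omega> \<inter> ballinf 0 (r_reg kr DS (4 * 2 ^ l))"
        and h9: "alphat TYPE('d) \<le> sigmat \<omega> U0 l x0" and h10: "sigmat \<omega> U0 l x0 \<le> 1 - alphat TYPE('d)"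
        and h11: "y \<in> Sinf \<omega>" and h12: "eucl (y - x0) \<le> 2 ^ l / 4"
      have l1: "1 \<le> l" using h6 by simp
      have lR: "R0k \<le> l" using h6 by simp
      have "real l < 2 ^ l"
      proof -
        have "l < 2 ^ l" by (rule less_exp)
        then show ?thesis by (metis of_nat_less_iff of_nat_numeral of_nat_power)
      qed
      then have R0d4: "R0d \<le> 4 * 2 ^ l" using h6 by linarith
      have den': "(1 - 1/3) * \<eta> \<le> real (card (Sinf \<omega> \<inter> ballinf x0 (4 * 2 ^ l))) / real (card (ballinf x0 (4 * 2 ^ l)))"
        using R0d R0d4 h8 by blast
      have U0S: "U0 \<subseteq> Sinf \<omega>" using h2 by (auto simp: Ucal_def)
      show "ch * (alphat TYPE('d) * (2/3) * \<eta> * ck1) \<le> Pw \<omega> y (\<lambda>X. hitT X Sg < exitT X (ballinf x0 (5 * 2 ^ l)))"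
        by (rule main_bound[OF assms(2) assms(10) assms(12) assms(4) assms(5) den' R0k lR l1 U0S h5
              less_imp_le[OF h3] h7 h8 h9 h10 h11 h12])
    qed
  qed
qed


end
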